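(* Fix an integer $r\ge 2$. Let $L$, $f$, $n_0$, $\mathcal{H}_{2D}$, $h_{TI}$, $v_{TI}$ and the two-site operator $h$ be as in the context. Let $x\in\{0,1\}^*$ with $x\in L$, let $n=f(x)\ge n_0$, and set $H=\sum_{\{u,v\}\in E_{\Lambda_r(n)}}h^{u,v}$. Then $E_0(H)\le 4n^r(r-1)+1/g(n)$ for any polynomial $g(n)$.
   Context: **Lattice.** $\Lambda_r(n)=\mathbb{Z}^r/n\mathbb{Z}^r$ is the periodic $r$-dimensional lattice of side $n$. The Lee metric is $d(x,y)=\sum_i\min(|x_i-y_i|,n-|x_i-y_i|)$, and $E_{\Lambda_r(n)}=\{\{x,y\}:d(x,y)=1\}$. $E_0(\cdot)$ is the smallest eigenvalue. **The 2D ingredients.** $L$ is a $\mathrm{QMA}_{\mathrm{EXP}}$-complete language, and $f:\{0,1\}^*\to\mathbb{Z}$, $n_0$, $\mathcal{H}_{2D}$, $h_{TI},v_{TI}$ satisfy the following. - $f(x)$ is a multiple of $3$ with $f(x)/3$ prime, $\log f(x)=O(\mathrm{poly}|x|)$, and $f$ is poly-time computable. - $h_{TI},v_{TI}$ are positive semidefinite operators on $\mathcal{H}_{2D}\otimes\mathcal{H}_{2D}$. - Let $n=f(x)\ge n_0$. On the $n\times n$ periodic square lattice, let $H_{TI}=\sum h_{TI}^{u,w}+\sum v_{TI}^{y,z}$, where the sums run over ordered pairs with $w$ the right neighbour of $u$ and $z$ the upper neighbour of $y$. Then $E_0(H_{TI})\le O(n^{-k})$ for an arbitrarily large constant $k$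 if $x\in L$, and $E_0(H_{TI})\ge\Omega(n^{-3})$ if $x\notin L$. **Local Hilbert space.** Let $T_1=\{\text{red},\text{yellow},\text{blue}\}$ ("colours") and $T_2=\{0,1,2\}$ ("numbers"). Each site carries $$(\mathcal{H}_{T_1}\otimes\mathcal{H}_{T_2}\otimes\mathcal{H}_{\sigma_1}\otimes\mathcal{H}_{\sigma_2})\otimes(\mathcal{H}'_{T_1}\otimes\mathcal{H}'_{T_2}\otimes\mathcal{H}'_{\sigma_1}\otimes\mathcal{H}'_{\sigma_2})\otimes\mathcal{H}_{2D},$$ where $\mathcal{H}_{T_1},\mathcal{H}'_{T_1}\cong\mathbb{C}^3$ have basis $T_1$, $\mathcal{H}_{T_2},\mathcal{H}'_{T_2}\cong\mathbb{C}^3$ have basis $T_2$, and $\mathcal{H}_{\sigma_i},\mathcal{H}'_{\sigma_i}$ are qubits. **Terms acting on sites $u,v$ (first copy).** - Tiling rule: $h_{tile}=8\sum_{(s,t)\in V}|s,t\rangle\langle s,t|$ on the $(T_1,T_2)$ registers of $u$ and $v$. Here $V$ is the set of pairs of tiles $s=(c,i)$, $t=(c',j)$ such that either $c=c'$ and $i=j$, or $c\ne c'$ and $i\ne j$. - EPR coupling: $A^{u,v}=16\sum_{i\in T_2}|i,i+1\bmod 3\rangle\langle i,i+1\bmod 3|_{T_2}\otimes\tfrac12(I-|\Phi^+\rangle\langle\Phi^+|)_{u_{\sigma_2}v_{\sigma_1}}$, with $|\Phi^+\rangle=(|00\rangle+|11\rangle)/\sqrt2$. Then $h_{EPR}=A^{u,v}+A^{v,u}$.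 - Loop penalty: $h_{loop}=2\sum_{c\ne d\in T_1}|c,d\rangle\langle c,d|$ on the $T_1$ registers. - The primed terms $h'_{tile},h'_{EPR},h'_{loop}$ are the same operators acting on the primed (second-copy) registers. - Copy constraint: $h_{copy}=\big(\sum_{c}|c,c\rangle\langle c,c|\big)_{\mathcal{H}_{T_1}}\otimes\big(\sum_d|d,d\rangle\langle d,d|\big)_{\mathcal{H}'_{T_1}}$. - Embedded 2D terms: $h_{RI}=\sum_i|i,i+1\bmod3\rangle\langle i,i+1\bmod3|_{\mathcal{H}_{T_2}}\otimes h_{TI}+\sum_i|i,i-1\bmod3\rangle\langle i,i-1\bmod3|_{\mathcal{H}_{T_2}}\otimes S h_{TI}S$, acting on $\mathcal{H}_{2D}\otimes\mathcal{H}_{2D}$, where $S$ is the swap of the two sites. The term $v_{RI}$ is defined identically with $\mathcal{H}'_{T_2}$ in place of $\mathcal{H}_{T_2}$ and $v_{TI}$ in place of $h_{TI}$. Finally, $h=h_{tile}+h_{EPR}+h_{loop}+h'_{tile}+h'_{EPR}+h'_{loop}+h_{copy}+h_{RI}+v_{RI}$. *)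

theory Defs
  imports "HOL-Library.FuncSet" "HOL-Computational_Algebra.Primes"
          "Jordan_Normal_Form.Jordan_Normal_Form"
begin

text \<open>A Hermitian operator on the space of functions \<open>B \<rightarrow> \<complex>\<close> (B a finite basis)
  is given by its matrix elements \<open>A b b'\<close> = <b|A|b'>.  We turn it into a JNF matrix by
  (an arbitrary, fixed) enumeration of the basis; the spectrum does not depend on it.\<close>

definition op_mat :: "'b set \<Rightarrow> ('b \<Rightarrow> 'b \<Rightarrow> complex) \<Rightarrow> complex mat" where
  "op_mat B A = (let e = (SOME e. bij_betw e {..<card B} B)
                 in mat (card B) (card B) (\<lambda>(i, j). A (e i) (e j)))"

definition E0 :: "complex mat \<Rightarrow> real" where
  "E0 M = Min {e :: real. eigenvalue M (complex_of_real e)}"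

definition psd :: "nat \<Rightarrow> complex mat \<Rightarrow> bool" where
  "psd m A \<longleftrightarrow> A \<in> carrier_mat m m
     \<and> (\<forall>i<m. \<forall>j<m. A $$ (i, j) = cnj (A $$ (j, i)))
     \<and> (\<forall>v \<in> carrier_vec m. 0 \<le> Re (\<Sum>i<m. cnj (vec_index v i) * vec_index (A *\<^sub>v v) i))"

text \<open>A two-site term \<open>t a b a' b'\<close> = <a,b| t |a',b'> (ket/bra on the two sites u, v,
  in this order).  Its embedding \<open>t^{u,v}\<close> into the many-body space over sites S with
  local basis states Loc: configurations are extensional functions \<open>S \<rightarrow> Loc\<close>.\<close>
definition embed2 :: "'s set \<Rightarrow> 's \<Rightarrow> 's \<Rightarrow> ('l \<Rightarrow> 'l \<Rightarrow> 'l \<Rightarrow> 'l \<Rightarrow> complex)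
    \<Rightarrow> ('s \<Rightarrow> 'l) \<Rightarrow> ('s \<Rightarrow> 'l) \<Rightarrow> complex" where
  "embed2 S u v t c c' =
     (if \<forall>w\<in>S - {u, v}. c w = c' w then t (c u) (c v) (c' u) (c' v) else 0)"

definition ham :: "'s set \<Rightarrow> ('s \<times> 's) set \<Rightarrow> ('l \<Rightarrow> 'l \<Rightarrow> 'l \<Rightarrow> 'l \<Rightarrow> complex)
    \<Rightarrow> ('s \<Rightarrow> 'l) \<Rightarrow> ('s \<Rightarrow> 'l) \<Rightarrow> complex" where
  "ham S P t c c' = (\<Sum>(u, v)\<in>P. embed2 S u v t c c')"

definition configs :: "'s set \<Rightarrow> 'l set \<Rightarrow> ('s \<Rightarrow> 'l) set" where
  "configs S Loc = PiE S (\<lambda>_. Loc)"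

text \<open>Conjugation by the swap S of the two sites: <a,b|S t S|a',b'> = <b,a|t|b',a'>.\<close>
definition swap_term :: "('l \<Rightarrow> 'l \<Rightarrow> 'l \<Rightarrow> 'l \<Rightarrow> complex) \<Rightarrow> ('l \<Rightarrow> 'l \<Rightarrow> 'l \<Rightarrow> 'l \<Rightarrow> complex)" where
  "swap_term t a b a' b' = t b a b' a'"

text \<open>Matrix element of an operator on \<open>H_2D \<otimes> H_2D\<close> (dim D each), basis |p,q> with
  index p*D+q (p on the first site).\<close>
definition entry2 :: "nat \<Rightarrow> complex mat \<Rightarrow> nat \<Rightarrow> nat \<Rightarrow> nat \<Rightarrow> nat \<Rightarrow> complex" where
  "entry2 D M p q p' q' = M $$ (p * D + q, p' * D + q')"

definition sq_sites :: "nat \<Rightarrow> (nat \<times> nat) set" where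
  "sq_sites n = {..<n} \<times> {..<n}"

definition right_pairs :: "nat \<Rightarrow> ((nat \<times> nat) \<times> (nat \<times> nat)) set" where
  "right_pairs n = {(u, w). u \<in> sq_sites n \<and> w = ((fst u + 1) mod n, snd u)}"

definition up_pairs :: "nat \<Rightarrow> ((nat \<times> nat) \<times> (nat \<times> nat)) set" where
  "up_pairs n = {(y, z). y \<in> sq_sites n \<and> z = (fst y, (snd y + 1) mod n)}"

definition H_TI :: "nat \<Rightarrow> complex mat \<Rightarrow> complex mat \<Rightarrow> nat \<Rightarrow> complex mat" where
  "H_TI D hTI vTI n = op_mat (configs (sq_sites n) {..<D})
     (\<lambda>c c'. ham (sq_sites n) (right_pairs n) (entry2 D hTI) c c'
           + ham (sq_sites n) (up_pairs n) (entry2 D vTI) c c')"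

definition lattice :: "nat \<Rightarrow> nat \<Rightarrow> (nat \<Rightarrow> nat) set" where
  "lattice r n = PiE {..<r} (\<lambda>_. {..<n})"

definition lee :: "nat \<Rightarrow> nat \<Rightarrow> (nat \<Rightarrow> nat) \<Rightarrow> (nat \<Rightarrow> nat) \<Rightarrow> int" where
  "lee r n x y = (\<Sum>i<r. min \<bar>int (x i) - int (y i)\<bar> (int n - \<bar>int (x i) - int (y i)\<bar>))"

definition edges :: "nat \<Rightarrow> nat \<Rightarrow> (nat \<Rightarrow> nat) set set" where
  "edges r n = {{x, y} | x y. x \<in> lattice r n \<and> y \<in> lattice r n \<and> lee r n x y = 1}"

text \<open>Each unordered edge {u,v} is summed once, via an (arbitrary but fixed) orientation
  (u,v) with u chosen from the edge; h is symmetric under swapping its sites.\<close>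
definition oriented_edges :: "nat \<Rightarrow> nat \<Rightarrow> ((nat \<Rightarrow> nat) \<times> (nat \<Rightarrow> nat)) set" where
  "oriented_edges r n = {(u, v). {u, v} \<in> edges r n \<and> u \<noteq> v \<and> u = (SOME w. w \<in> {u, v})}"

text \<open>Registers of one site: colour, number, two qubits, their primed copies, and \<open>H_2D\<close>.
  Colours red, yellow, blue are encoded as 0, 1, 2.\<close>
datatype reg = T1 | T2 | S1 | S2 | T1' | T2' | S1' | S2' | Q

definition reg_dim :: "nat \<Rightarrow> reg \<Rightarrow> nat" where
  "reg_dim D r = (case r of T1 \<Rightarrow> 3 | T2 \<Rightarrow> 3 | S1 \<Rightarrow> 2 | S2 \<Rightarrow> 2
                   | T1' \<Rightarrow> 3 | T2' \<Rightarrow> 3 | S1' \<Rightarrow> 2 | S2' \<Rightarrow> 2 | Q \<Rightarrow> D)"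

definition loc :: "nat \<Rightarrow> (reg \<Rightarrow> nat) set" where
  "loc D = PiE UNIV (\<lambda>r. {..<reg_dim D r})"

type_synonym term2 = "(reg \<Rightarrow> nat) \<Rightarrow> (reg \<Rightarrow> nat) \<Rightarrow> (reg \<Rightarrow> nat) \<Rightarrow> (reg \<Rightarrow> nat) \<Rightarrow> complex"

definition acts :: "reg set \<Rightarrow> reg set \<Rightarrow> term2 \<Rightarrow> term2" where
  "acts Ru Rv f a b a' b' =
     (if (\<forall>r. r \<notin> Ru \<longrightarrow> a r = a' r) \<and> (\<forall>r. r \<notin> Rv \<longrightarrow> b r = b' r)
      then f a b a' b' else 0)"

definition tileV :: "nat \<times> nat \<Rightarrow> nat \<times> nat \<Rightarrow> bool" where
  "tileV s t \<longleftrightarrow> (fst s = fst t \<and> snd s = snd t) \<or> (fst s \<noteq> fst t \<and> snd s \<noteq> snd t)"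

definition h_tile_gen :: "reg \<Rightarrow> reg \<Rightarrow> term2" where
  "h_tile_gen C N = acts {} {} (\<lambda>a b a' b'. if tileV (a C, a N) (b C, b N) then 8 else 0)"

text \<open>\<open>A^{u,v} = 16 \<Sum>_i |i,i+1><i,i+1|_{N} \<otimes> (1/2)(I - |\<Phi>+><\<Phi>+|)_{u_{\<sigma>2} v_{\<sigma>1}}\<close>,
  using <p q|\<Phi>+><\<Phi>+|p' q'> = [p=q][p'=q']/2.\<close>
definition A_gen :: "reg \<Rightarrow> reg \<Rightarrow> reg \<Rightarrow> term2" where
  "A_gen N Sa Sb = acts {Sb} {Sa} (\<lambda>a b a' b'.
      if b N = (a N + 1) mod 3 then
        16 * ((1/2) * ((if a Sb = a' Sb \<and> b Sa = b' Sa then 1 else 0)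
                      - (if a Sb = b Sa \<and> a' Sb = b' Sa then 1/2 else 0)))
      else 0)"

definition h_EPR_gen :: "reg \<Rightarrow> reg \<Rightarrow> reg \<Rightarrow> term2" where
  "h_EPR_gen N Sa Sb a b a' b' = A_gen N Sa Sb a b a' b' + swap_term (A_gen N Sa Sb) a b a' b'"

definition h_loop_gen :: "reg \<Rightarrow> term2" where
  "h_loop_gen C = acts {} {} (\<lambda>a b a' b'. if a C \<noteq> b C then 2 else 0)"

definition h_copy :: term2 where
  "h_copy = acts {} {} (\<lambda>a b a' b'. if a T1 = b T1 \<and> a T1' = b T1' then 1 else 0)"

text \<open>\<open>\<Sum>_i |i,i+1><i,i+1|_N \<otimes> M + \<Sum>_i |i,i-1><i,i-1|_N \<otimes> S M S\<close>, M acting on the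
  \<open>H_2D\<close> registers of the two sites.\<close>
definition h_RI_gen :: "nat \<Rightarrow> reg \<Rightarrow> complex mat \<Rightarrow> term2" where
  "h_RI_gen D N M = acts {Q} {Q} (\<lambda>a b a' b'.
      (if b N = (a N + 1) mod 3 then entry2 D M (a Q) (b Q) (a' Q) (b' Q) else 0)
    + (if b N = (a N + 2) mod 3 then entry2 D M (b Q) (a Q) (b' Q) (a' Q) else 0))"

definition h_full :: "nat \<Rightarrow> complex mat \<Rightarrow> complex mat \<Rightarrow> term2" where
  "h_full D hTI vTI a b a' b' =
       h_tile_gen T1 T2 a b a' b' + h_EPR_gen T2 S1 S2 a b a' b'
     + h_loop_gen T1 a b a' b'
     + h_tile_gen T1' T2' a b a' b' + h_EPR_gen T2' S1' S2' a b a' b'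
     + h_loop_gen T1' a b a' b'
     + h_copy a b a' b'
     + h_RI_gen D T2 hTI a b a' b' + h_RI_gen D T2' vTI a b a' b'"

definition H_r :: "nat \<Rightarrow> complex mat \<Rightarrow> complex mat \<Rightarrow> nat \<Rightarrow> nat \<Rightarrow> complex mat" where
  "H_r D hTI vTI r n = op_mat (configs (lattice r n) (loc D))
     (ham (lattice r n) (oriented_edges r n) (h_full D hTI vTI))"

end

theory Submission
  imports Defs "Jordan_Normal_Form.Spectral_Radius"
begin


definition enum :: "'b set \<Rightarrow> nat \<Rightarrow> 'b" where
  "enum B = (SOME e. bij_betw e {..<card B} B)"

lemma enum_bij: assumes "finite B" shows "bij_betw (enum B) {..<card B} B"
proof -
  obtain h where "bij_betw h {0..<card B} B" using ex_bij_betw_nat_finite[OF assms] by blast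
  hence "\<exists>e. bij_betw e {..<card B} B" by (auto simp: atLeast0LessThan)
  thus ?thesis unfolding enum_def by (rule someI_ex)
qed

lemma op_mat_eq: "op_mat B A = mat (card B) (card B) (\<lambda>(i,j). A (enum B i) (enum B j))"
  by (simp add: op_mat_def enum_def Let_def)

lemma op_mat_carrier: "op_mat B A \<in> carrier_mat (card B) (card B)"
  by (simp add: op_mat_eq)

lemma dim_row_op[simp]: "dim_row (op_mat B A) = card B"
  by (simp add: op_mat_eq)

lemma op_mat_mult_vec:
  assumes fin: "finite B" and i: "i < card B" and v: "dim_vec v = card B"
  shows "(op_mat B A *\<^sub>v v) $ i = (\<Sum>j<card B. A (enum B i) (enum B j) * v $ j)"
  using i v by (simp add: op_mat_eq mult_mat_vec_def scalar_prod_def atLeast0LessThan)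

lemma eig_from_fun:
  assumes fin: "finite B"
    and eq: "\<And>c. c \<in> B \<Longrightarrow> (\<Sum>b\<in>B. A c b * \<psi> b) = lam * \<psi> c"
    and b0: "b0 \<in> B" and nz: "\<psi> b0 \<noteq> 0"
  shows "eigenvalue (op_mat B A) lam"
proof -
  let ?e = "enum B"
  have bij: "bij_betw ?e {..<card B} B" by (rule enum_bij[OF fin])
  define v where "v = vec (card B) (\<lambda>i. \<psi> (?e i))"
  have dv: "dim_vec v = card B" by (simp add: v_def)
  have Mv: "op_mat B A *\<^sub>v v = lam \<cdot>\<^sub>v v"
  proof (rule eq_vecI)
    fix i assume "i < dim_vec (lam \<cdot>\<^sub>v v)"
    hence i: "i < card B" by (simp add: v_def)
    have "(op_mat B A *\<^sub>v v) $ i = (\<Sum>j<card B. A (?e i) (?e j) * \<psi> (?e j))"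
      using op_mat_mult_vec[OF fin i dv] by (simp add: v_def)
    also have "\<dots> = (\<Sum>b\<in>B. A (?e i) b * \<psi> b)"
      by (rule sum.reindex_bij_betw[OF bij, of "\<lambda>b. A (?e i) b * \<psi> b"])
    also have "\<dots> = lam * \<psi> (?e i)" using eq bij i by (meson bij_betwE lessThan_iff)
    finally show "(op_mat B A *\<^sub>v v) $ i = (lam \<cdot>\<^sub>v v) $ i" using i by (simp add: v_def)
  qed (simp add: v_def)
  obtain i0 where i0: "i0 < card B" "?e i0 = b0"
    using bij b0 unfolding bij_betw_def by (metis imageE lessThan_iff)
  have "v \<noteq> 0\<^sub>v (card B)"
  proof
    assume "v = 0\<^sub>v (card B)"
    hence "v $ i0 = 0" using i0 by simp
    thus False using i0 nz by (simp add: v_def)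
  qed
  hence "eigenvector (op_mat B A) v lam"
    unfolding eigenvector_def dim_row_op using Mv carrier_vecI[OF dv] by (intro conjI)
  thus ?thesis unfolding eigenvalue_def by (rule exI)
qed

lemma fun_from_eig:
  assumes fin: "finite B" and ev: "eigenvector (op_mat B A) v k"
  shows "\<exists>\<phi>. (\<forall>c\<in>B. (\<Sum>b\<in>B. A c b * \<phi> b) = k * \<phi> c) \<and> (\<exists>b\<in>B. \<phi> b \<noteq> 0)"
proof -
  let ?e = "enum B"
  have bij: "bij_betw ?e {..<card B} B" by (rule enum_bij[OF fin])
  define \<phi> where "\<phi> b = v $ (the_inv_into {..<card B} ?e b)" for b
  have cv: "v \<in> carrier_vec (card B)" and Mv: "op_mat B A *\<^sub>v v = k \<cdot>\<^sub>v v"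
    and nz: "v \<noteq> 0\<^sub>v (card B)"
    using ev unfolding eigenvector_def dim_row_op by blast+
  have dv: "dim_vec v = card B" using cv by (rule carrier_vecD)
  have phie: "\<phi> (?e j) = v $ j" if "j < card B" for j
    using that bij unfolding \<phi>_def
    by (simp add: bij_betw_def the_inv_into_f_f)
  have "(\<Sum>b\<in>B. A c b * \<phi> b) = k * \<phi> c" if c: "c \<in> B" for c
  proof -
    obtain i where i: "i < card B" "?e i = c" using bij c unfolding bij_betw_def by (metis imageE lessThan_iff)
    have "(\<Sum>b\<in>B. A c b * \<phi> b) = (\<Sum>j<card B. A c (?e j) * \<phi> (?e j))"
      by (rule sum.reindex_bij_betw[OF bij, symmetric])
    also have "\<dots> = (\<Sum>j<card B. A (?e i) (?e j) * v $ j)" using i phie by simp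
    also have "\<dots> = (op_mat B A *\<^sub>v v) $ i" using op_mat_mult_vec[OF fin i(1) dv] by simp
    also have "\<dots> = k * v $ i" using Mv i dv by simp
    also have "\<dots> = k * \<phi> c" using phie[OF i(1)] i(2) by simp
    finally show ?thesis .
  qed
  moreover have "\<exists>b\<in>B. \<phi> b \<noteq> 0"
  proof -
    obtain i where i: "i < card B" "v $ i \<noteq> 0" using nz dv by (metis eq_vecI index_zero_vec(1,2))
    thus ?thesis using phie bij unfolding bij_betw_def by (metis imageI lessThan_iff)
  qed
  ultimately show ?thesis by blast
qed

lemma E0_le:
  assumes M: "M \<in> carrier_mat N N" and ev: "eigenvalue M (complex_of_real e)"
  shows "E0 M \<le> e"
proof -
  have "{e. eigenvalue M (complex_of_real e)} \<subseteq> Re ` spectrum M"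
    unfolding spectrum_def by (auto intro!: image_eqI[where x = "complex_of_real _"])
  hence fin: "finite {e. eigenvalue M (complex_of_real e)}"
    using card_finite_spectrum(1)[OF M] finite_subset by blast
  show ?thesis unfolding E0_def by (rule Min_le[OF fin], simp add: ev)
qed

lemma E0_eig:
  assumes M: "M \<in> carrier_mat N N" and N: "N > 0"
    and herm: "\<And>i j. i < N \<Longrightarrow> j < N \<Longrightarrow> M $$ (i, j) = cnj (M $$ (j, i))"
  shows "eigenvalue M (complex_of_real (E0 M))"
proof -
  obtain k where "k \<in> spectrum M" using spectrum_non_empty[OF M N] by blast
  then obtain v where ev: "eigenvector M v k" unfolding spectrum_def eigenvalue_def by auto
  have dv: "dim_vec v = N" and Mv: "M *\<^sub>v v = k \<cdot>\<^sub>v v" and nz: "v \<noteq> 0\<^sub>v N"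
    using ev M unfolding eigenvector_def by auto
  have Mvi: "(M *\<^sub>v v) $ i = (\<Sum>j<N. M $$ (i, j) * v $ j)" if "i < N" for i
    using that M dv by (auto simp: mult_mat_vec_def scalar_prod_def atLeast0LessThan)
  define s where "s = (\<Sum>i<N. \<Sum>j<N. cnj (v $ i) * M $$ (i, j) * v $ j)"
  define nn where "nn = (\<Sum>i<N. cnj (v $ i) * v $ i)"
  have s1: "s = k * nn"
  proof -
    have "s = (\<Sum>i<N. cnj (v $ i) * (M *\<^sub>v v) $ i)"
      unfolding s_def by (rule sum.cong, simp, simp add: Mvi sum_distrib_left mult.assoc)
    also have "\<dots> = (\<Sum>i<N. cnj (v $ i) * (k * v $ i))"
      by (rule sum.cong, simp, simp add: Mv dv)
    finally show ?thesis unfolding nn_def by (simp add: sum_distrib_left algebra_simps)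
  qed
  have s2: "cnj s = s"
  proof -
    have hc: "cnj (M $$ (i,j)) = M $$ (j,i)" if "i<N" "j<N" for i j using herm[OF that(2,1)] by simp
    have "cnj s = (\<Sum>i<N. \<Sum>j<N. v $ i * cnj (M $$ (i, j)) * cnj (v $ j))"
      unfolding s_def by simp
    also have "\<dots> = (\<Sum>i<N. \<Sum>j<N. v $ i * M $$ (j, i) * cnj (v $ j))"
      by (intro sum.cong refl, simp add: hc)
    also have "\<dots> = s" unfolding s_def by (subst sum.swap, intro sum.cong refl, simp add: algebra_simps)
    finally show ?thesis .
  qed
  have nnr: "nn = complex_of_real (\<Sum>i<N. (cmod (v $ i))^2)"
    unfolding nn_def of_real_sum by (intro sum.cong refl) (metis complex_norm_square of_real_power mult.commute)
  have "(\<Sum>i<N. (cmod (v $ i))^2) > 0"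
  proof -
    obtain i where i: "i < N" "v $ i \<noteq> 0" using nz dv by (metis eq_vecI index_zero_vec(1,2))
    have "(cmod (v $ i))^2 \<le> (\<Sum>i<N. (cmod (v $ i))^2)"
      by (rule member_le_sum, insert i, auto)
    moreover have "(cmod (v $ i))^2 > 0" using i by simp
    ultimately show ?thesis by linarith
  qed
  hence nn0: "nn \<noteq> 0" using nnr by (metis of_real_eq_0_iff less_irrefl)
  have cnn: "cnj nn = nn" using nnr by (metis complex_cnj_complex_of_real)
  have "cnj k * nn = k * nn" using s1 s2 cnn by (metis complex_cnj_mult)
  hence "cnj k = k" using nn0 by simp
  hence kr: "k = complex_of_real (Re k)" by (metis Reals_cnj_iff complex_is_Real_iff of_real_Re)
  have "eigenvalue M (complex_of_real (Re k))" using ev kr unfolding eigenvalue_def by metis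
  hence ne: "{e. eigenvalue M (complex_of_real e)} \<noteq> {}" by blast
  have "{e. eigenvalue M (complex_of_real e)} \<subseteq> Re ` spectrum M"
    unfolding spectrum_def by (auto intro!: image_eqI[where x = "complex_of_real _"])
  hence fin: "finite {e. eigenvalue M (complex_of_real e)}"
    using card_finite_spectrum(1)[OF M] finite_subset by blast
  show ?thesis using Min_in[OF fin ne] unfolding E0_def by simp
qed


lemma reg_UNIV: "(UNIV :: reg set) = {T1, T2, S1, S2, T1', T2', S1', S2', Q}"
  using reg.exhaust by auto

lemma finite_reg[simp]: "finite (UNIV :: reg set)"
  by (simp add: reg_UNIV)

lemma finite_loc[simp]: "finite (loc D)"
  unfolding loc_def by (rule finite_PiE, auto)

lemma finite_configs: "finite S \<Longrightarrow> finite Loc \<Longrightarrow> finite (configs S Loc)"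
  unfolding configs_def by (rule finite_PiE, auto)

lemma embed2_sum:
  assumes finS: "finite S" and finL: "finite Loc" and c: "c \<in> configs S Loc"
    and x: "x \<in> S" and y: "y \<in> S" and xy: "x \<noteq> y"
  shows "(\<Sum>c'\<in>configs S Loc. embed2 S x y t c c' * g c')
       = (\<Sum>a\<in>Loc. \<Sum>b\<in>Loc. t (c x) (c y) a b * g (c(x:=a, y:=b)))"
proof -
  let ?C = "configs S Loc"
  let ?P = "\<lambda>c'. \<forall>w\<in>S - {x, y}. c w = c' w"
  let ?h = "\<lambda>(a, b). c(x:=a, y:=b)"
  have "(\<Sum>c'\<in>?C. embed2 S x y t c c' * g c')
      = (\<Sum>c'\<in>?C. if ?P c' then t (c x) (c y) (c' x) (c' y) * g c' else 0)"
    by (rule sum.cong, simp, simp add: embed2_def)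
  also have "\<dots> = (\<Sum>c'\<in>{c'\<in>?C. ?P c'}. t (c x) (c y) (c' x) (c' y) * g c')"
    by (rule sum.inter_filter[symmetric], rule finite_configs[OF finS finL])
  also have "{c'\<in>?C. ?P c'} = ?h ` (Loc \<times> Loc)"
  proof (intro equalityI subsetI)
    fix c' assume "c' \<in> {c'\<in>?C. ?P c'}"
    hence c': "c' \<in> ?C" "?P c'" by auto
    have "c' = c(x := c' x, y := c' y)"
    proof
      fix w show "c' w = (c(x := c' x, y := c' y)) w"
      proof (cases "w \<in> S")
        case True thus ?thesis using c' by auto
      next
        case False
        hence "c' w = undefined" "c w = undefined" using c c' False
          by (auto simp: configs_def PiE_def extensional_def)
        thus ?thesis using False x y by auto
      qed
    qed
    moreover have "c' x \<in> Loc" "c' y \<in> Loc" using c' x y by (auto simp: configs_def)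
    ultimately show "c' \<in> ?h ` (Loc \<times> Loc)" by (auto intro!: image_eqI[where x = "(c' x, c' y)"])
  next
    fix c' assume "c' \<in> ?h ` (Loc \<times> Loc)"
    then obtain a b where ab: "a \<in> Loc" "b \<in> Loc" "c' = c(x:=a, y:=b)" by auto
    have "c' \<in> ?C" using ab c x y by (auto simp: configs_def PiE_def extensional_def Pi_def)
    thus "c' \<in> {c'\<in>?C. ?P c'}" using ab by auto
  qed
  also have "inj_on ?h (Loc \<times> Loc)"
  proof (rule inj_onI, clarsimp)
    fix a b a' b' assume "c(x := a, y := b) = c(x := a', y := b')"
    hence "(c(x := a, y := b)) x = (c(x := a', y := b')) x"
      "(c(x := a, y := b)) y = (c(x := a', y := b')) y" by auto
    thus "a = a' \<and> b = b'" using xy by auto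
  qed
  hence "(\<Sum>c'\<in>?h ` (Loc \<times> Loc). t (c x) (c y) (c' x) (c' y) * g c')
       = (\<Sum>p\<in>Loc \<times> Loc. t (c x) (c y) (?h p x) (?h p y) * g (?h p))"
    by (rule sum.reindex_cong[OF _ refl], simp)
  also have "\<dots> = (\<Sum>(a,b)\<in>Loc \<times> Loc. t (c x) (c y) a b * g (c(x:=a, y:=b)))"
    using xy by (intro sum.cong refl) (auto split: prod.splits)
  also have "\<dots> = (\<Sum>a\<in>Loc. \<Sum>b\<in>Loc. t (c x) (c y) a b * g (c(x:=a, y:=b)))"
    by (rule sum.cartesian_product[symmetric])
  finally show ?thesis .
qed

lemma sum_loc_upd:
  assumes a0: "a0 \<in> loc D"
  shows "(\<Sum>a\<in>loc D. if (\<forall>r. r \<noteq> R \<longrightarrow> a0 r = a r) then F a else 0)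
       = (\<Sum>\<alpha><reg_dim D R. F (a0(R:=\<alpha>)))"
proof -
  have "(\<Sum>a\<in>loc D. if (\<forall>r. r \<noteq> R \<longrightarrow> a0 r = a r) then F a else 0)
      = (\<Sum>a\<in>{a\<in>loc D. \<forall>r. r \<noteq> R \<longrightarrow> a0 r = a r}. F a)"
    by (rule sum.inter_filter[symmetric], simp)
  also have "{a\<in>loc D. \<forall>r. r \<noteq> R \<longrightarrow> a0 r = a r} = (\<lambda>\<alpha>. a0(R:=\<alpha>)) ` {..<reg_dim D R}"
  proof (intro equalityI subsetI)
    fix a assume "a \<in> {a\<in>loc D. \<forall>r. r \<noteq> R \<longrightarrow> a0 r = a r}"
    hence a: "a \<in> loc D" "\<forall>r. r \<noteq> R \<longrightarrow> a0 r = a r" by auto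
    have "a = a0(R := a R)" using a(2) by (auto simp: fun_eq_iff)
    moreover have "a R < reg_dim D R" using a(1) by (auto simp: loc_def)
    ultimately show "a \<in> (\<lambda>\<alpha>. a0(R:=\<alpha>)) ` {..<reg_dim D R}" by blast
  next
    fix a assume "a \<in> (\<lambda>\<alpha>. a0(R:=\<alpha>)) ` {..<reg_dim D R}"
    then obtain \<alpha> where "\<alpha> < reg_dim D R" "a = a0(R:=\<alpha>)" by auto
    thus "a \<in> {a\<in>loc D. \<forall>r. r \<noteq> R \<longrightarrow> a0 r = a r}" using a0 by (auto simp: loc_def)
  qed
  also have "(\<Sum>a\<in>(\<lambda>\<alpha>. a0(R:=\<alpha>)) ` {..<reg_dim D R}. F a) = (\<Sum>\<alpha><reg_dim D R. F (a0(R:=\<alpha>)))"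
    by (rule sum.reindex_cong[OF _ refl refl], rule inj_onI, metis fun_upd_same)
  finally show ?thesis .
qed

lemma sum_loc_eq:
  assumes a0: "a0 \<in> loc D"
  shows "(\<Sum>a\<in>loc D. if (\<forall>r. a0 r = a r) then F a else 0) = F a0"
proof -
  have "(\<Sum>a\<in>loc D. if (\<forall>r. a0 r = a r) then F a else 0) = (\<Sum>a\<in>loc D. if a0 = a then F a else 0)"
    by (rule sum.cong, simp, simp add: fun_eq_iff)
  also have "\<dots> = F a0" using a0 by simp
  finally show ?thesis .
qed

lemma if_conj_mult: "(if P1 \<and> P2 then x else 0) * (y::complex) = (if P1 then (if P2 then x * y else 0) else 0)"
  by simp

lemma if_sum_out: "(\<Sum>b\<in>B. if P then g b else (0::complex)) = (if P then (\<Sum>b\<in>B. g b) else 0)"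
  by simp

lemma acts_split:
  "(\<Sum>a\<in>A. \<Sum>b\<in>B. acts Ru Rv f a0 b0 a b * G a b)
   = (\<Sum>a\<in>A. if (\<forall>r. r \<notin> Ru \<longrightarrow> a0 r = a r)
        then (\<Sum>b\<in>B. if (\<forall>r. r \<notin> Rv \<longrightarrow> b0 r = b r) then f a0 b0 a b * G a b else 0) else 0)"
proof (rule sum.cong[OF refl])
  fix a
  have pw: "acts Ru Rv f a0 b0 a b * G a b = (if (\<forall>r. r \<notin> Ru \<longrightarrow> a0 r = a r) then
     (if (\<forall>r. r \<notin> Rv \<longrightarrow> b0 r = b r) then f a0 b0 a b * G a b else 0) else 0)" for b
    unfolding acts_def by (rule if_conj_mult)
  show "(\<Sum>b\<in>B. acts Ru Rv f a0 b0 a b * G a b) = (if (\<forall>r. r \<notin> Ru \<longrightarrow> a0 r = a r)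
        then (\<Sum>b\<in>B. if (\<forall>r. r \<notin> Rv \<longrightarrow> b0 r = b r) then f a0 b0 a b * G a b else 0) else 0)"
    unfolding pw by (rule if_sum_out)
qed

lemma acts0_sum:
  assumes a0: "a0 \<in> loc D" and b0: "b0 \<in> loc D"
  shows "(\<Sum>a\<in>loc D. \<Sum>b\<in>loc D. acts {} {} f a0 b0 a b * G a b) = f a0 b0 a0 b0 * G a0 b0"
proof -
  have "(\<Sum>a\<in>loc D. \<Sum>b\<in>loc D. acts {} {} f a0 b0 a b * G a b)
     = (\<Sum>a\<in>loc D. if (\<forall>r. r \<notin> {} \<longrightarrow> a0 r = a r) then (\<Sum>b\<in>loc D. if (\<forall>r. r \<notin> {} \<longrightarrow> b0 r = b r) then f a0 b0 a b * G a b else 0) else 0)"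
    by (rule acts_split)
  also have "\<dots> = (\<Sum>a\<in>loc D. if (\<forall>r. a0 r = a r) then (\<Sum>b\<in>loc D. if (\<forall>r. b0 r = b r) then f a0 b0 a b * G a b else 0) else 0)"
    by (simp only: empty_iff not_False_eq_True simp_thms)
  also have "\<dots> = (\<Sum>a\<in>loc D. if (\<forall>r. a0 r = a r) then f a0 b0 a b0 * G a b0 else 0)"
    by (intro sum.cong refl, simp only: sum_loc_eq[OF b0])
  also have "\<dots> = f a0 b0 a0 b0 * G a0 b0" by (rule sum_loc_eq[OF a0])
  finally show ?thesis .
qed

lemma acts11_sum:
  assumes a0: "a0 \<in> loc D" and b0: "b0 \<in> loc D"
  shows "(\<Sum>a\<in>loc D. \<Sum>b\<in>loc D. acts {R1} {R2} f a0 b0 a b * G a b)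
    = (\<Sum>\<alpha><reg_dim D R1. \<Sum>\<beta><reg_dim D R2. f a0 b0 (a0(R1:=\<alpha>)) (b0(R2:=\<beta>)) * G (a0(R1:=\<alpha>)) (b0(R2:=\<beta>)))"
proof -
  have "(\<Sum>a\<in>loc D. \<Sum>b\<in>loc D. acts {R1} {R2} f a0 b0 a b * G a b)
     = (\<Sum>a\<in>loc D. if (\<forall>r. r \<notin> {R1} \<longrightarrow> a0 r = a r) then (\<Sum>b\<in>loc D. if (\<forall>r. r \<notin> {R2} \<longrightarrow> b0 r = b r) then f a0 b0 a b * G a b else 0) else 0)"
    by (rule acts_split)
  also have "\<dots> = (\<Sum>a\<in>loc D. if (\<forall>r. r \<noteq> R1 \<longrightarrow> a0 r = a r) then (\<Sum>b\<in>loc D. if (\<forall>r. r \<noteq> R2 \<longrightarrow> b0 r = b r) then f a0 b0 a b * G a b else 0) else 0)"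
    by (simp only: singleton_iff)
  also have "\<dots> = (\<Sum>a\<in>loc D. if (\<forall>r. r \<noteq> R1 \<longrightarrow> a0 r = a r) then (\<Sum>\<beta><reg_dim D R2. f a0 b0 a (b0(R2:=\<beta>)) * G a (b0(R2:=\<beta>))) else 0)"
    by (intro sum.cong refl, simp only: sum_loc_upd[OF b0])
  also have "\<dots> = (\<Sum>\<alpha><reg_dim D R1. \<Sum>\<beta><reg_dim D R2. f a0 b0 (a0(R1:=\<alpha>)) (b0(R2:=\<beta>)) * G (a0(R1:=\<alpha>)) (b0(R2:=\<beta>)))"
    by (rule sum_loc_upd[OF a0])
  finally show ?thesis .
qed


lemma mod_suc_neq: assumes "a < n" "n \<ge> 2" shows "(a + 1) mod n \<noteq> (a::nat)"
proof (cases "a + 1 < n")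
  case True thus ?thesis by simp
next
  case False hence "a + 1 = n" using assms by simp
  thus ?thesis using assms by auto
qed

lemma mod_suc2_neq: "a < n \<Longrightarrow> n \<ge> 3 \<Longrightarrow> ((a + 1) mod n + 1) mod n \<noteq> (a::nat)"
proof (cases "a + 2 < n")
  case True assume "a < n" "n \<ge> 3" thus ?thesis using True by auto
next
  case False assume a: "a < n" and n: "n \<ge> 3"
  show ?thesis
  proof (cases "a + 1 = n")
    case True thus ?thesis using n by auto
  next
    case False
    hence "a + 2 = n" using a \<open>\<not> a + 2 < n\<close> by auto
    thus ?thesis using n by auto
  qed
qed

lemma mod_suc_inj: "a < n \<Longrightarrow> b < n \<Longrightarrow> (a + 1) mod n = (b + 1) mod (n::nat) \<Longrightarrow> a = b"
  by (cases "a + 1 = n"; cases "b + 1 = n") auto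

locale lat =
  fixes n r :: nat
  assumes n3: "3 dvd n" and nge: "n \<ge> 3" and r2: "r \<ge> 2"
begin

definition sh :: "nat \<Rightarrow> (nat \<Rightarrow> nat) \<Rightarrow> (nat \<Rightarrow> nat)" where
  "sh j x = x(j := (x j + 1) mod n)"

lemma npos: "n > 0" using nge by auto

lemma latI: "x \<in> lattice r n \<longleftrightarrow> (\<forall>i<r. x i < n) \<and> (\<forall>i. i \<ge> r \<longrightarrow> x i = undefined)"
  unfolding lattice_def PiE_def extensional_def Pi_def by auto

lemma sh_in: "x \<in> lattice r n \<Longrightarrow> j < r \<Longrightarrow> sh j x \<in> lattice r n"
  unfolding latI sh_def using npos by auto

lemma sh_neq: "x \<in> lattice r n \<Longrightarrow> j < r \<Longrightarrow> sh j x \<noteq> x"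
proof
  assume x: "x \<in> lattice r n" and j: "j < r" and e: "sh j x = x"
  hence "(x j + 1) mod n = x j" unfolding sh_def by (metis fun_upd_same)
  thus False using mod_suc_neq[of "x j" n] x j nge unfolding latI by auto
qed

lemma sh_app: "sh j x i = (if i = j then (x j + 1) mod n else x i)"
  by (simp add: sh_def)

lemma sh_inj: "x \<in> lattice r n \<Longrightarrow> y \<in> lattice r n \<Longrightarrow> sh j x = sh j y \<Longrightarrow> x = y"
proof
  fix i assume x: "x \<in> lattice r n" and y: "y \<in> lattice r n" and e: "sh j x = sh j y"
  show "x i = y i"
  proof (cases "i = j")
    case True
    have "(x j + 1) mod n = (y j + 1) mod n" using e by (metis sh_app)
    moreover have "x j < n \<or> j \<ge> r" "y j < n \<or> j \<ge> r" using x y unfolding latI by (auto simp: not_le)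
    ultimately show ?thesis using True x y mod_suc_inj[of "x j" n "y j"] unfolding latI
      by (metis not_le)
  next
    case False thus ?thesis using e by (metis sh_app)
  qed
qed

lemma lee_sym: "lee r n x y = lee r n y x"
  unfolding lee_def by (simp add: abs_minus_commute)

lemma lee_sh:
  assumes x: "x \<in> lattice r n" and j: "j < r"
  shows "lee r n x (sh j x) = 1"
proof -
  define d where "d i = min \<bar>int (x i) - int (sh j x i)\<bar> (int n - \<bar>int (x i) - int (sh j x i)\<bar>)" for i
  have "lee r n x (sh j x) = (\<Sum>i<r. d i)" unfolding lee_def d_def by simp
  also have "\<dots> = d j + (\<Sum>i\<in>{..<r} - {j}. d i)" using j by (simp add: sum.remove)
  also have "(\<Sum>i\<in>{..<r} - {j}. d i) = 0" by (rule sum.neutral, auto simp: d_def sh_app)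
  also have "d j = 1"
  proof -
    have xj: "x j < n" using x j unfolding latI by auto
    show ?thesis
    proof (cases "x j + 1 < n")
      case True thus ?thesis using nge by (simp add: d_def sh_app)
    next
      case False
      hence "x j = n - 1" using xj by auto
      thus ?thesis using nge by (simp add: d_def sh_app of_nat_diff)
    qed
  qed
  finally show ?thesis by simp
qed

lemma lee_1:
  assumes x: "x \<in> lattice r n" and y: "y \<in> lattice r n" and l: "lee r n x y = 1"
  shows "\<exists>j<r. y = sh j x \<or> x = sh j y"
proof -
  define d where "d i = min \<bar>int (x i) - int (y i)\<bar> (int n - \<bar>int (x i) - int (y i)\<bar>)" for i
  have xi: "x i < n" if "i < r" for i using x that unfolding latI by auto
  have yi: "y i < n" if "i < r" for i using y that unfolding latI by auto
  have dnn: "d i \<ge> 0" if "i < r" for i using xi[OF that] yi[OF that] unfolding d_def by auto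
  have d0: "d i = 0 \<Longrightarrow> x i = y i" if "i < r" for i using xi[OF that] yi[OF that] unfolding d_def by auto
  have s: "(\<Sum>i<r. d i) = 1" using l unfolding lee_def d_def by simp
  obtain j where j: "j < r" "d j \<noteq> 0"
  proof (rule ccontr)
    assume "\<not> thesis"
    hence "\<forall>j<r. d j = 0" using that by blast
    hence "(\<Sum>i<r. d i) = 0" by simp
    thus False using s by simp
  qed
  have split: "(\<Sum>i<r. d i) = d j + (\<Sum>i\<in>{..<r} - {j}. d i)" using j by (simp add: sum.remove)
  have rest_nn: "(\<Sum>i\<in>{..<r} - {j}. d i) \<ge> 0" by (rule sum_nonneg, auto intro: dnn)
  have dj: "d j = 1" using split rest_nn s dnn[OF j(1)] j(2) by linarith
  hence "(\<Sum>i\<in>{..<r} - {j}. d i) = 0" using split s by linarith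
  hence "\<forall>i\<in>{..<r} - {j}. d i = 0" using sum_nonneg_eq_0_iff[of "{..<r} - {j}" d] dnn by auto
  hence same: "x i = y i" if "i < r" "i \<noteq> j" for i using d0 that by auto
  have ext: "z = w" if "z \<in> lattice r n" "w \<in> lattice r n" "\<And>i. i < r \<Longrightarrow> z i = w i" for z w
  proof
    fix i show "z i = w i" using that unfolding latI by (cases "i < r") auto
  qed
  have xj: "x j < n" and yj: "y j < n" using xi yi j by auto
  have "y j = (x j + 1) mod n \<or> x j = (y j + 1) mod n"
  proof -
    have "\<bar>int (x j) - int (y j)\<bar> = 1 \<or> int n - \<bar>int (x j) - int (y j)\<bar> = 1"
      using dj unfolding d_def by linarith
    thus ?thesis
    proof
      assume "\<bar>int (x j) - int (y j)\<bar> = 1"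
      hence "y j = x j + 1 \<or> x j = y j + 1" by linarith
      thus ?thesis using xj yj by auto
    next
      assume "int n - \<bar>int (x j) - int (y j)\<bar> = 1"
      hence "(x j = 0 \<and> y j = n - 1) \<or> (y j = 0 \<and> x j = n - 1)" using xj yj by linarith
      thus ?thesis using nge by auto
    qed
  qed
  thus ?thesis
  proof
    assume h: "y j = (x j + 1) mod n"
    have "y = sh j x" by (rule ext[OF y sh_in[OF x j(1)]], auto simp: sh_app h same)
    thus ?thesis using j by blast
  next
    assume h: "x j = (y j + 1) mod n"
    have "x = sh j y" by (rule ext[OF x sh_in[OF y j(1)]], auto simp: sh_app h same)
    thus ?thesis using j by blast
  qed
qed

lemma edge_eq:
  assumes x: "x \<in> lattice r n" and y: "y \<in> lattice r n" and j: "j < r" and k: "k < r"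
    and e: "{x, sh j x} = {y, sh k y}"
  shows "x = y \<and> j = k"
proof -
  have xj: "x j < n" using x j unfolding latI by auto
  from e have "(x = y \<and> sh j x = sh k y) \<or> (x = sh k y \<and> sh j x = y)" by (auto simp: doubleton_eq_iff)
  thus ?thesis
  proof
    assume h: "x = y \<and> sh j x = sh k y"
    have "j = k"
    proof (rule ccontr)
      assume "j \<noteq> k"
      hence "(x j + 1) mod n = x j" using h by (metis sh_app)
      thus False using mod_suc_neq[OF xj] nge by auto
    qed
    thus ?thesis using h by auto
  next
    assume h: "x = sh k y \<and> sh j x = y"
    hence "x = sh k (sh j x)" by metis
    hence e1: "x j = sh k (sh j x) j" by (rule fun_cong)
    have e2: "sh k (sh j x) j = (if j = k then ((x j + 1) mod n + 1) mod n else (x j + 1) mod n)"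
      by (simp add: sh_app)
    have "x j = (if j = k then ((x j + 1) mod n + 1) mod n else (x j + 1) mod n)"
      using e1 e2 by (rule trans)
    thus ?thesis using mod_suc_neq[OF xj] mod_suc2_neq[OF xj nge] nge by (auto split: if_splits)
  qed
qed

definition orient :: "(nat \<Rightarrow> nat) \<times> nat \<Rightarrow> (nat \<Rightarrow> nat) \<times> (nat \<Rightarrow> nat)" where
  "orient p = (let x = fst p; y = sh (snd p) x in if (SOME w. w \<in> {x, y}) = x then (x, y) else (y, x))"

lemma orient_bij: "bij_betw orient (lattice r n \<times> {..<r}) (oriented_edges r n)"
proof -
  have setof: "{fst (orient (x, j)), snd (orient (x, j))} = {x, sh j x}" for x j
    by (auto simp: orient_def Let_def)
  have someq: "(SOME w. w \<in> {a, b}) \<in> {a, b}" for a b :: "nat \<Rightarrow> nat" by (rule someI[where x=a]) simp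
  show ?thesis unfolding bij_betw_def
  proof (intro conjI)
    show "inj_on orient (lattice r n \<times> {..<r})"
    proof (rule inj_onI, clarsimp)
      fix x j y k assume x: "x \<in> lattice r n" and j: "j < r" and y: "y \<in> lattice r n" and k: "k < r"
        and e: "orient (x, j) = orient (y, k)"
      have "{x, sh j x} = {y, sh k y}" using setof[of x j] setof[of y k] e by simp
      thus "x = y \<and> j = k" by (rule edge_eq[OF x y j k])
    qed
  next
    show "orient ` (lattice r n \<times> {..<r}) = oriented_edges r n"
    proof (intro equalityI subsetI)
      fix e assume "e \<in> orient ` (lattice r n \<times> {..<r})"
      then obtain x j where x: "x \<in> lattice r n" and j: "j < r" and e: "e = orient (x, j)" by auto
      define y where "y = sh j x"
      have y: "y \<in> lattice r n" using sh_in[OF x j] y_def by simp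
      have ed: "{x, y} \<in> edges r n" unfolding edges_def using x y lee_sh[OF x j] y_def by blast
      have ne: "x \<noteq> y" using sh_neq[OF x j] y_def by auto
      define s where "s = (SOME w. w \<in> {x, y})"
      have eqs: "(SOME w. w \<in> {y, x}) = s" unfolding s_def by (metis insert_commute)
      have sin: "s \<in> {x, y}" unfolding s_def by (rule someq)
      show "e \<in> oriented_edges r n"
      proof (cases "(SOME w. w \<in> {x, y}) = x")
        case True
        hence "e = (x, y)" using e by (simp add: orient_def y_def)
        thus ?thesis using True ed ne unfolding oriented_edges_def by auto
      next
        case False
        hence "e = (y, x)" using e by (simp add: orient_def y_def)
        moreover have "(SOME w. w \<in> {y, x}) = y" using False sin unfolding eqs s_def[symmetric] by blast
        moreover have "{y, x} \<in> edges r n" using ed by (simp only: insert_commute)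
        ultimately show ?thesis using ne unfolding oriented_edges_def by auto
      qed
    next
      fix e assume "e \<in> oriented_edges r n"
      then obtain u v where e: "e = (u, v)" and ed: "{u, v} \<in> edges r n" and ne: "u \<noteq> v"
        and so: "u = (SOME w. w \<in> {u, v})" unfolding oriented_edges_def by auto
      from ed obtain a b where ab: "{u, v} = {a, b}" "a \<in> lattice r n" "b \<in> lattice r n" "lee r n a b = 1"
        unfolding edges_def by auto
      hence uv: "u \<in> lattice r n" "v \<in> lattice r n" "lee r n u v = 1"
        using lee_sym by (auto simp: doubleton_eq_iff)
      obtain j where j: "j < r" "v = sh j u \<or> u = sh j v" using lee_1[OF uv] by blast
      from j(2) show "e \<in> orient ` (lattice r n \<times> {..<r})"
      proof
        assume h: "v = sh j u"
        have "orient (u, j) = (u, v)" using so[symmetric] h by (simp add: orient_def)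
        thus ?thesis using e uv j by force
      next
        assume h: "u = sh j v"
        have "(SOME w. w \<in> {v, u}) = u" using so by (metis insert_commute)
        hence "orient (v, j) = (u, v)" using h ne by (simp add: orient_def)
        thus ?thesis using e uv j by force
      qed
    qed
  qed
qed

lemma sum_OE:
  assumes sym: "\<And>u v. u \<in> lattice r n \<Longrightarrow> v \<in> lattice r n \<Longrightarrow> g u v = g v u"
  shows "(\<Sum>(u, v)\<in>oriented_edges r n. g u v) = (\<Sum>x\<in>lattice r n. \<Sum>j<r. g x (sh j x))"
proof -
  have "(\<Sum>(u, v)\<in>oriented_edges r n. g u v) = (\<Sum>p\<in>lattice r n \<times> {..<r}. case_prod g (orient p))"
    by (rule sum.reindex_bij_betw[OF orient_bij, symmetric])
  also have "\<dots> = (\<Sum>p\<in>lattice r n \<times> {..<r}. g (fst p) (sh (snd p) (fst p)))"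
  proof (rule sum.cong[OF refl])
    fix p assume p: "p \<in> lattice r n \<times> {..<r}"
    have "sh (snd p) (fst p) \<in> lattice r n" using p sh_in by auto
    thus "case_prod g (orient p) = g (fst p) (sh (snd p) (fst p))"
      using p sym by (auto simp: orient_def Let_def)
  qed
  also have "\<dots> = (\<Sum>(x, j)\<in>lattice r n \<times> {..<r}. g x (sh j x))"
    by (simp add: split_def)
  also have "\<dots> = (\<Sum>x\<in>lattice r n. \<Sum>j<r. g x (sh j x))"
    by (rule sum.cartesian_product[symmetric])
  finally show ?thesis .
qed

end


lemma mod3_cases: "(k::nat) < 3 \<Longrightarrow> k = 0 \<or> k = 1 \<or> k = 2" by auto

lemma loc_bound: "a \<in> loc D \<Longrightarrow> a R < reg_dim D R"
  by (auto simp: loc_def)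

lemma reg_dim_simps[simp]: "reg_dim D T1 = 3" "reg_dim D T2 = 3" "reg_dim D S1 = 2" "reg_dim D S2 = 2"
  "reg_dim D T1' = 3" "reg_dim D T2' = 3" "reg_dim D S1' = 2" "reg_dim D S2' = 2" "reg_dim D Q = D"
  by (simp_all add: reg_dim_def)

lemma A_gen_zero: "b0 N \<noteq> (a0 N + 1) mod 3 \<Longrightarrow> A_gen N Sa Sb a0 b0 a b = 0"
  by (simp add: A_gen_def acts_def)

lemma A_gen_swap_zero: "a0 N \<noteq> (b0 N + 1) mod 3 \<Longrightarrow> swap_term (A_gen N Sa Sb) a0 b0 a b = 0"
  by (simp add: A_gen_def acts_def swap_term_def)

lemma RI_zero: "a0 N = b0 N \<Longrightarrow> a0 N < 3 \<Longrightarrow> h_RI_gen D N M a0 b0 a b = 0"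
  unfolding h_RI_gen_def acts_def by (drule mod3_cases, auto)

lemma epr_sum:
  assumes a0: "a0 \<in> loc D" and b0: "b0 \<in> loc D" and da: "reg_dim D Sa = 2" and db: "reg_dim D Sb = 2"
    and cond: "b0 N = (a0 N + 1) mod 3"
    and hG: "\<And>\<alpha> \<beta>. \<alpha> < 2 \<Longrightarrow> \<beta> < 2 \<Longrightarrow> G (a0(Sb:=\<alpha>)) (b0(Sa:=\<beta>)) = (if \<alpha> = \<beta> then K else 0)"
  shows "(\<Sum>a\<in>loc D. \<Sum>b\<in>loc D. A_gen N Sa Sb a0 b0 a b * G a b) = 0"
proof -
  have "(\<Sum>a\<in>loc D. \<Sum>b\<in>loc D. A_gen N Sa Sb a0 b0 a b * G a b)
      = (\<Sum>\<alpha><2. \<Sum>\<beta><2. 16 * ((1/2) * ((if a0 Sb = \<alpha> \<and> b0 Sa = \<beta> then 1 else 0)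
                      - (if a0 Sb = b0 Sa \<and> \<alpha> = \<beta> then 1/2 else 0))) * (if \<alpha> = \<beta> then K else 0))"
    unfolding A_gen_def acts11_sum[OF a0 b0] da db
    by (intro sum.cong refl, simp add: cond hG)
  also have "\<dots> = 0"
  proof -
    have "a0 Sb < 2" "b0 Sa < 2" using loc_bound[OF a0, of Sb] loc_bound[OF b0, of Sa] da db by auto
    hence "a0 Sb = 0 \<or> a0 Sb = 1" "b0 Sa = 0 \<or> b0 Sa = 1" by auto
    thus ?thesis by (auto simp: numeral_2_eq_2 lessThan_Suc)
  qed
  finally show ?thesis .
qed

lemma RI_sum:
  assumes a0: "a0 \<in> loc D" and b0: "b0 \<in> loc D" and cond: "b0 N = (a0 N + 1) mod 3" and aN: "a0 N < 3"
  shows "(\<Sum>a\<in>loc D. \<Sum>b\<in>loc D. h_RI_gen D N M a0 b0 a b * G a b)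
     = (\<Sum>\<alpha><D. \<Sum>\<beta><D. entry2 D M (a0 Q) (b0 Q) \<alpha> \<beta> * G (a0(Q:=\<alpha>)) (b0(Q:=\<beta>)))"
proof -
  have ne: "Suc (a0 N) mod 3 \<noteq> Suc (Suc (a0 N)) mod 3" using mod3_cases[OF aN] by auto
  show ?thesis
    unfolding h_RI_gen_def acts11_sum[OF a0 b0] reg_dim_simps
    by (intro sum.cong refl, simp add: cond ne)
qed

definition cls :: "(reg \<Rightarrow> nat) \<Rightarrow> (reg \<Rightarrow> nat) \<Rightarrow> bool" where
  "cls a a' \<longleftrightarrow> a T1 = a' T1 \<and> a T2 = a' T2 \<and> a T1' = a' T1' \<and> a T2' = a' T2'"

lemma acts_zero:
  assumes nc: "\<not> (cls a0 a \<and> cls b0 b)"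
    and "T1 \<notin> Ru" "T2 \<notin> Ru" "T1' \<notin> Ru" "T2' \<notin> Ru" "T1 \<notin> Rv" "T2 \<notin> Rv" "T1' \<notin> Rv" "T2' \<notin> Rv"
  shows "acts Ru Rv f a0 b0 a b = 0" "acts Rv Ru f b0 a0 b a = 0"
  using assms unfolding acts_def cls_def by metis+

lemma h_full_zero:
  assumes nc: "\<not> (cls a0 a \<and> cls b0 b)"
  shows "h_full D hTI vTI a0 b0 a b = 0"
proof -
  have z1: "h_tile_gen C N a0 b0 a b = 0" for C N
    unfolding h_tile_gen_def by (rule acts_zero(1)[OF nc], simp_all)
  have z2: "A_gen T2 S1 S2 a0 b0 a b = 0" "A_gen T2' S1' S2' a0 b0 a b = 0"
    unfolding A_gen_def by (rule acts_zero(1)[OF nc], simp_all)+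
  have z3: "swap_term (A_gen T2 S1 S2) a0 b0 a b = 0" "swap_term (A_gen T2' S1' S2') a0 b0 a b = 0"
    unfolding A_gen_def swap_term_def by (rule acts_zero(2)[OF nc], simp_all)+
  have z4: "h_loop_gen C a0 b0 a b = 0" for C
    unfolding h_loop_gen_def by (rule acts_zero(1)[OF nc], simp_all)
  have z5: "h_copy a0 b0 a b = 0"
    unfolding h_copy_def by (rule acts_zero(1)[OF nc], simp_all)
  have z6: "h_RI_gen D N M a0 b0 a b = 0" for N M
    unfolding h_RI_gen_def by (rule acts_zero(1)[OF nc], simp_all)
  show ?thesis unfolding h_full_def h_EPR_gen_def by (simp only: z1 z2 z3 z4 z5 z6 add_0)
qed

lemma RI_sym:
  assumes "a N < 3" "b N < 3"
  shows "h_RI_gen D N M a b a' b' = h_RI_gen D N M b a b' a'"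
proof -
  have c1: "(b N = (a N + 1) mod 3) = (a N = (b N + 2) mod 3)"
    using mod3_cases[OF assms(1)] mod3_cases[OF assms(2)] by auto
  have c2: "(b N = (a N + 2) mod 3) = (a N = (b N + 1) mod 3)"
    using mod3_cases[OF assms(1)] mod3_cases[OF assms(2)] by auto
  have if_swap: "(if P1 \<and> P2 then x + y else 0) = (if P2 \<and> P1 then y + x else (0::complex))"
    for P1 P2 x y by auto
  show ?thesis unfolding h_RI_gen_def acts_def c1 c2 by (rule if_swap)
qed

lemma h_full_sym:
  assumes a: "a \<in> loc D" and b: "b \<in> loc D"
  shows "h_full D hTI vTI a b a' b' = h_full D hTI vTI b a b' a'"
proof -
  have t: "h_tile_gen C N a b a' b' = h_tile_gen C N b a b' a'" for C N
    unfolding h_tile_gen_def acts_def tileV_def by auto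
  have l: "h_loop_gen C a b a' b' = h_loop_gen C b a b' a'" for C
    unfolding h_loop_gen_def acts_def by auto
  have cp: "h_copy a b a' b' = h_copy b a b' a'"
    unfolding h_copy_def acts_def by auto
  have e: "h_EPR_gen N Sa Sb a b a' b' = h_EPR_gen N Sa Sb b a b' a'" for N Sa Sb
    unfolding h_EPR_gen_def swap_term_def by simp
  have r1: "h_RI_gen D T2 hTI a b a' b' = h_RI_gen D T2 hTI b a b' a'"
    by (rule RI_sym, insert loc_bound[OF a, of T2] loc_bound[OF b, of T2], auto)
  have r2: "h_RI_gen D T2' vTI a b a' b' = h_RI_gen D T2' vTI b a b' a'"
    by (rule RI_sym, insert loc_bound[OF a, of T2'] loc_bound[OF b, of T2'], auto)
  show ?thesis unfolding h_full_def t l cp e r1 r2 ..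
qed


lemma upd2: "x \<noteq> y \<Longrightarrow> (c(x := (c x)(R1 := \<alpha>), y := (c y)(R2 := \<beta>))) z R
   = (if z = x \<and> R = R1 then \<alpha> else if z = y \<and> R = R2 then \<beta> else c z R)"
  by auto

lemma suc_mod3_neq: "Suc (k mod 3) mod 3 \<noteq> k mod (3::nat)"
  using mod3_cases[of "k mod 3"] by auto

lemma suc_mod3_neq': "Suc (Suc (k mod 3)) mod 3 \<noteq> k mod (3::nat)"
  using mod3_cases[of "k mod 3"] by auto

context lat begin

definition colA :: "nat \<Rightarrow> (nat \<Rightarrow> nat) \<Rightarrow> nat" where
  "colA i x = (\<Sum>k\<in>{..<r} - {i}. x k) mod 3"

definition num :: "nat \<Rightarrow> (nat \<Rightarrow> nat) \<Rightarrow> nat" where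
  "num i x = x i mod 3"

lemma colA_lt[simp]: "colA i x < 3" by (simp add: colA_def)
lemma num_lt[simp]: "num i x < 3" by (simp add: num_def)

lemma colA_neq[simp]: "Suc (colA i x) mod 3 \<noteq> colA i x" "colA i x \<noteq> Suc (colA i x) mod 3"
  using suc_mod3_neq by (metis colA_def)+
lemma num_neq[simp]: "Suc (num i x) mod 3 \<noteq> num i x" "num i x \<noteq> Suc (num i x) mod 3"
  using suc_mod3_neq by (metis num_def)+
lemma num_neq2[simp]: "Suc (Suc (num i x) mod 3) mod 3 \<noteq> num i x"
  using suc_mod3_neq'[of "x i"] unfolding num_def by (simp add: mod_simps)

lemma num_sh: "num i (sh j x) = (if i = j then Suc (num i x) mod 3 else num i x)"
  unfolding num_def sh_app by (auto simp: mod_mod_cancel[OF n3] mod_simps)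

lemma colA_sh:
  assumes j: "j < r"
  shows "colA i (sh j x) = (if i = j then colA i x else Suc (colA i x) mod 3)"
proof (cases "i = j")
  case True
  have "(\<Sum>k\<in>{..<r} - {i}. sh j x k) = (\<Sum>k\<in>{..<r} - {i}. x k)"
    by (rule sum.cong, auto simp: sh_app True)
  thus ?thesis using True by (simp add: colA_def)
next
  case False
  let ?A = "{..<r} - {i}"
  have jA: "j \<in> ?A" using j False by auto
  have e1: "(\<Sum>k\<in>?A. sh j x k) = sh j x j + (\<Sum>k\<in>?A - {j}. sh j x k)"
    using jA by (simp add: sum.remove)
  have e2: "(\<Sum>k\<in>?A - {j}. sh j x k) = (\<Sum>k\<in>?A - {j}. x k)"
    by (rule sum.cong, auto simp: sh_app)
  have e3: "(\<Sum>k\<in>?A. x k) = x j + (\<Sum>k\<in>?A - {j}. x k)"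
    using jA by (simp add: sum.remove)
  define s where "s = (\<Sum>k\<in>?A - {j}. x k)"
  have "colA i (sh j x) = ((x j + 1) mod n + s) mod 3"
    unfolding colA_def e1 e2 s_def by (simp add: sh_app)
  also have "\<dots> = (x j + 1 + s) mod 3"
    by (metis mod_add_left_eq mod_mod_cancel[OF n3])
  also have "\<dots> = Suc (colA i x) mod 3"
    unfolding colA_def e3 s_def by (simp add: mod_simps)
  finally show ?thesis using False by simp
qed

definition PL :: "(nat \<Rightarrow> nat) set" where
  "PL = PiE {2..<r} (\<lambda>_. {..<n})"

definition pt :: "nat \<Rightarrow> nat \<Rightarrow> (nat \<Rightarrow> nat) \<Rightarrow> (nat \<Rightarrow> nat)" where
  "pt a b p = (\<lambda>i\<in>{..<r}. if i = 0 then a else if i = 1 then b else p i)"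

lemma r0: "0 < r" and r1: "1 < r" using r2 by auto

lemma pt_app0[simp]: "pt a b p 0 = a" and pt_app1[simp]: "pt a b p 1 = b"
  using r0 r1 by (auto simp: pt_def)

lemma pt_in: "a < n \<Longrightarrow> b < n \<Longrightarrow> p \<in> PL \<Longrightarrow> pt a b p \<in> lattice r n"
  unfolding latI pt_def PL_def by (auto simp: PiE_def Pi_def)

lemma pt_inj:
  assumes p: "p \<in> PL" and p': "p' \<in> PL" and e: "pt a b p = pt a' b' p'"
  shows "a = a' \<and> b = b' \<and> p = p'"
proof -
  have "a = a'" "b = b'" using e by (metis pt_app0, metis pt_app1)
  moreover have "p = p'"
  proof
    fix i show "p i = p' i"
    proof (cases "i \<in> {2..<r}")
      case True
      hence "pt a b p i = p i" "pt a' b' p' i = p' i" by (auto simp: pt_def)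
      thus ?thesis using e by metis
    next
      case False
      thus ?thesis using p p' by (auto simp: PL_def PiE_def extensional_def)
    qed
  qed
  ultimately show ?thesis by blast
qed

lemma sh0_pt: "sh 0 (pt a b p) = pt ((a + 1) mod n) b p"
  using r0 by (auto simp: sh_def pt_def fun_eq_iff)

lemma sh1_pt: "sh 1 (pt a b p) = pt a ((b + 1) mod n) p"
  using r1 by (auto simp: sh_def pt_def fun_eq_iff)

lemma pt_bij: "bij_betw (\<lambda>(p, u). pt (fst u) (snd u) p) (PL \<times> sq_sites n) (lattice r n)"
  unfolding bij_betw_def
proof (intro conjI)
  show "inj_on (\<lambda>(p, u). pt (fst u) (snd u) p) (PL \<times> sq_sites n)"
  proof (rule inj_onI)
    fix pu pu' assume a: "pu \<in> PL \<times> sq_sites n" "pu' \<in> PL \<times> sq_sites n"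
      and e: "(\<lambda>(p, u). pt (fst u) (snd u) p) pu = (\<lambda>(p, u). pt (fst u) (snd u) p) pu'"
    obtain p u p' u' where pu: "pu = (p, u)" "pu' = (p', u')" by (cases pu, cases pu')
    have "pt (fst u) (snd u) p = pt (fst u') (snd u') p'" using e pu by simp
    moreover have "p \<in> PL" "p' \<in> PL" using a pu by auto
    ultimately have "fst u = fst u' \<and> snd u = snd u' \<and> p = p'" using pt_inj by blast
    thus "pu = pu'" using pu by (simp add: prod_eq_iff)
  qed
next
  show "(\<lambda>(p, u). pt (fst u) (snd u) p) ` (PL \<times> sq_sites n) = lattice r n"
  proof (intro equalityI subsetI)
    fix x assume "x \<in> (\<lambda>(p, u). pt (fst u) (snd u) p) ` (PL \<times> sq_sites n)"
    thus "x \<in> lattice r n" by (auto intro!: pt_in simp: sq_sites_def)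
  next
    fix x assume x: "x \<in> lattice r n"
    define p where "p = restrict x {2..<r}"
    have p: "p \<in> PL" using x unfolding p_def PL_def latI by auto
    have u: "(x 0, x 1) \<in> sq_sites n" using x r0 r1 unfolding latI sq_sites_def by auto
    have "pt (x 0) (x 1) p = x"
    proof
      fix i show "pt (x 0) (x 1) p i = x i"
        using x unfolding pt_def p_def latI
        by (cases "i < r"; cases "i = 0"; cases "i = 1") auto
    qed
    thus "x \<in> (\<lambda>(p, u). pt (fst u) (snd u) p) ` (PL \<times> sq_sites n)"
      using p u by (auto intro!: image_eqI[where x = "(p, (x 0, x 1))"])
  qed
qed

lemma sum_planes:
  "(\<Sum>x\<in>lattice r n. F x) = (\<Sum>p\<in>PL. \<Sum>u\<in>sq_sites n. F (pt (fst u) (snd u) p))"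
proof -
  have "(\<Sum>x\<in>lattice r n. F x) = (\<Sum>pu\<in>PL \<times> sq_sites n. F ((\<lambda>(p, u). pt (fst u) (snd u) p) pu))"
    by (rule sum.reindex_bij_betw[OF pt_bij, symmetric])
  also have "\<dots> = (\<Sum>p\<in>PL. \<Sum>u\<in>sq_sites n. F (pt (fst u) (snd u) p))"
    by (simp add: sum.cartesian_product split_def)
  finally show ?thesis .
qed

lemma card_PL: "card PL = n ^ (r - 2)"
  unfolding PL_def by (simp add: card_PiE)

lemma card_S: "card (lattice r n) = n ^ r"
  unfolding lattice_def by (simp add: card_PiE)

lemma finite_S: "finite (lattice r n)"
  unfolding lattice_def by (rule finite_PiE, auto)

lemma finite_PL: "finite PL"
  unfolding PL_def by (rule finite_PiE, auto)

end


locale ctx = lat +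
  fixes D :: nat and hTI vTI :: "complex mat" and v0 :: "(nat \<times> nat \<Rightarrow> nat) \<Rightarrow> complex"
    and E :: complex and q0 :: "nat \<times> nat \<Rightarrow> nat"
  assumes D1: "D \<ge> 1"
    and v0eig: "\<And>q. q \<in> configs (sq_sites n) {..<D} \<Longrightarrow>
      (\<Sum>q'\<in>configs (sq_sites n) {..<D}. (ham (sq_sites n) (right_pairs n) (entry2 D hTI) q q'
          + ham (sq_sites n) (up_pairs n) (entry2 D vTI) q q') * v0 q') = E * v0 q"
    and q0: "q0 \<in> configs (sq_sites n) {..<D}" and v0q0: "v0 q0 \<noteq> 0"
begin

definition Qp :: "(nat \<Rightarrow> nat) \<Rightarrow> ((nat \<Rightarrow> nat) \<Rightarrow> reg \<Rightarrow> nat) \<Rightarrow> (nat \<times> nat \<Rightarrow> nat)" where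
  "Qp p c = (\<lambda>u\<in>sq_sites n. c (pt (fst u) (snd u) p) Q)"

definition cl :: "((nat \<Rightarrow> nat) \<Rightarrow> reg \<Rightarrow> nat) \<Rightarrow> bool" where
  "cl c \<longleftrightarrow> (\<forall>x\<in>lattice r n. c x T1 = colA 0 x \<and> c x T2 = num 0 x \<and> c x T1' = colA 1 x \<and> c x T2' = num 1 x)"

definition sgA :: "reg \<Rightarrow> reg \<Rightarrow> nat \<Rightarrow> ((nat \<Rightarrow> nat) \<Rightarrow> reg \<Rightarrow> nat) \<Rightarrow> bool" where
  "sgA Sa Sb j c \<longleftrightarrow> (\<forall>z\<in>lattice r n. c z Sb = c (sh j z) Sa)"

definition sgX :: "reg \<Rightarrow> reg \<Rightarrow> nat \<Rightarrow> (nat \<Rightarrow> nat) \<Rightarrow> ((nat \<Rightarrow> nat) \<Rightarrow> reg \<Rightarrow> nat) \<Rightarrow> bool" where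
  "sgX Sa Sb j x c \<longleftrightarrow> (\<forall>z\<in>lattice r n. z \<noteq> x \<longrightarrow> c z Sb = c (sh j z) Sa)"

definition qq :: "((nat \<Rightarrow> nat) \<Rightarrow> reg \<Rightarrow> nat) \<Rightarrow> complex" where
  "qq c = (\<Prod>p\<in>PL. v0 (Qp p c))"

definition psi :: "((nat \<Rightarrow> nat) \<Rightarrow> reg \<Rightarrow> nat) \<Rightarrow> complex" where
  "psi c = (if cl c \<and> sgA S1 S2 0 c \<and> sgA S1' S2' 1 c then qq c else 0)"

lemma cl_upd:
  assumes "x \<noteq> y" "T1 \<noteq> R1" "T2 \<noteq> R1" "T1' \<noteq> R1" "T2' \<noteq> R1" "T1 \<noteq> R2" "T2 \<noteq> R2" "T1' \<noteq> R2" "T2' \<noteq> R2"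
  shows "cl (c(x := (c x)(R1 := \<alpha>), y := (c y)(R2 := \<beta>))) = cl c"
  unfolding cl_def upd2[OF assms(1)] using assms(2-9) by simp

lemma qq_upd:
  assumes "x \<noteq> y" "Q \<noteq> R1" "Q \<noteq> R2"
  shows "qq (c(x := (c x)(R1 := \<alpha>), y := (c y)(R2 := \<beta>))) = qq c"
proof -
  have "Qp p (c(x := (c x)(R1 := \<alpha>), y := (c y)(R2 := \<beta>))) = Qp p c" for p
    unfolding Qp_def upd2[OF assms(1)] using assms by auto
  thus ?thesis unfolding qq_def by simp
qed

lemma sgA_upd_other:
  assumes "x \<noteq> y" "Sa \<noteq> R1" "Sb \<noteq> R1" "Sa \<noteq> R2" "Sb \<noteq> R2"
  shows "sgA Sa Sb j (c(x := (c x)(R1 := \<alpha>), y := (c y)(R2 := \<beta>))) = sgA Sa Sb j c"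
  unfolding sgA_def upd2[OF assms(1)] using assms(2-5) by simp

lemma sgA_upd_pair:
  assumes x: "x \<in> lattice r n" and j: "j < r" and ab: "Sa \<noteq> Sb"
  shows "sgA Sa Sb j (c(x := (c x)(Sb := \<alpha>), sh j x := (c (sh j x))(Sa := \<beta>)))
     = (\<alpha> = \<beta> \<and> sgX Sa Sb j x c)"
proof -
  have ne: "x \<noteq> sh j x" using sh_neq[OF x j] by auto
  let ?c = "c(x := (c x)(Sb := \<alpha>), sh j x := (c (sh j x))(Sa := \<beta>))"
  have e1: "?c z Sb = (if z = x then \<alpha> else c z Sb)" for z
    unfolding upd2[OF ne] using ab by auto
  have e2: "?c (sh j z) Sa = (if z = x then \<beta> else c (sh j z) Sa)" if z: "z \<in> lattice r n" for z
  proof -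
    have "(sh j z = sh j x) = (z = x)" using sh_inj[OF z x] by auto
    thus ?thesis unfolding upd2[OF ne] using ab by auto
  qed
  show ?thesis unfolding sgA_def sgX_def using x e1 e2 by (auto; metis)
qed

lemma configs_loc: "c \<in> configs (lattice r n) (loc D) \<Longrightarrow> x \<in> lattice r n \<Longrightarrow> c x \<in> loc D"
  by (auto simp: configs_def)

definition Tsum :: "((nat \<Rightarrow> nat) \<Rightarrow> reg \<Rightarrow> nat) \<Rightarrow> (nat \<Rightarrow> nat) \<Rightarrow> (nat \<Rightarrow> nat) \<Rightarrow> complex" where
  "Tsum c x y = (\<Sum>a\<in>loc D. \<Sum>b\<in>loc D. h_full D hTI vTI (c x) (c y) a b * psi (c(x := a, y := b)))"

definition RIt :: "complex mat \<Rightarrow> nat \<Rightarrow> ((nat \<Rightarrow> nat) \<Rightarrow> reg \<Rightarrow> nat) \<Rightarrow> (nat \<Rightarrow> nat) \<Rightarrow> complex" where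
  "RIt M j c x = (\<Sum>\<alpha><D. \<Sum>\<beta><D. entry2 D M (c x Q) (c (sh j x) Q) \<alpha> \<beta>
        * psi (c(x := (c x)(Q := \<alpha>), sh j x := (c (sh j x))(Q := \<beta>))))"

lemma Tsum_split:
  "(\<Sum>a\<in>A. \<Sum>b\<in>B. h_full D hTI vTI a0 b0 a b * G a b) =
     (\<Sum>a\<in>A. \<Sum>b\<in>B. h_tile_gen T1 T2 a0 b0 a b * G a b)
   + (\<Sum>a\<in>A. \<Sum>b\<in>B. A_gen T2 S1 S2 a0 b0 a b * G a b)
   + (\<Sum>a\<in>A. \<Sum>b\<in>B. swap_term (A_gen T2 S1 S2) a0 b0 a b * G a b)
   + (\<Sum>a\<in>A. \<Sum>b\<in>B. h_loop_gen T1 a0 b0 a b * G a b)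
   + (\<Sum>a\<in>A. \<Sum>b\<in>B. h_tile_gen T1' T2' a0 b0 a b * G a b)
   + (\<Sum>a\<in>A. \<Sum>b\<in>B. A_gen T2' S1' S2' a0 b0 a b * G a b)
   + (\<Sum>a\<in>A. \<Sum>b\<in>B. swap_term (A_gen T2' S1' S2') a0 b0 a b * G a b)
   + (\<Sum>a\<in>A. \<Sum>b\<in>B. h_loop_gen T1' a0 b0 a b * G a b)
   + (\<Sum>a\<in>A. \<Sum>b\<in>B. h_copy a0 b0 a b * G a b)
   + (\<Sum>a\<in>A. \<Sum>b\<in>B. h_RI_gen D T2 hTI a0 b0 a b * G a b)
   + (\<Sum>a\<in>A. \<Sum>b\<in>B. h_RI_gen D T2' vTI a0 b0 a b * G a b)"
  unfolding h_full_def h_EPR_gen_def by (simp only: distrib_right sum.distrib add.assoc)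

lemma diag_sum:
  assumes a0: "a0 \<in> loc D" and b0: "b0 \<in> loc D"
  shows "(\<Sum>a\<in>loc D. \<Sum>b\<in>loc D. h_tile_gen C N a0 b0 a b * G a b)
           = (if tileV (a0 C, a0 N) (b0 C, b0 N) then 8 else 0) * G a0 b0"
    and "(\<Sum>a\<in>loc D. \<Sum>b\<in>loc D. h_loop_gen C a0 b0 a b * G a b)
           = (if a0 C \<noteq> b0 C then 2 else 0) * G a0 b0"
    and "(\<Sum>a\<in>loc D. \<Sum>b\<in>loc D. h_copy a0 b0 a b * G a b)
           = (if a0 T1 = b0 T1 \<and> a0 T1' = b0 T1' then 1 else 0) * G a0 b0"
  unfolding h_tile_gen_def h_loop_gen_def h_copy_def acts0_sum[OF a0 b0] by simp_all

lemma num_neq3[simp]: "num i x \<noteq> Suc (Suc (num i x) mod 3) mod 3"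
  using num_neq2 by metis

lemma zero_sum: "(\<And>a b. f a b = 0) \<Longrightarrow> (\<Sum>a\<in>A. \<Sum>b\<in>B. f a b * (G a b :: complex)) = 0"
  by simp

lemma edge:
  assumes c: "c \<in> configs (lattice r n) (loc D)" and clc: "cl c" and x: "x \<in> lattice r n" and j: "j < r"
  shows "Tsum c x (sh j x) = (if j < 2 then 2 else 4) * psi c
          + (if j = 0 then RIt hTI 0 c x else 0) + (if j = 1 then RIt vTI 1 c x else 0)"
proof -
  define y where "y = sh j x"
  have y: "y \<in> lattice r n" using sh_in[OF x j] y_def by simp
  have ne: "x \<noteq> y" using sh_neq[OF x j] y_def by auto
  define a0 where "a0 = c x"
  define b0 where "b0 = c y"
  have a0: "a0 \<in> loc D" and b0: "b0 \<in> loc D" using configs_loc[OF c] x y a0_def b0_def by auto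
  define G where "G a b = psi (c(x := a, y := b))" for a b
  have G0: "G a0 b0 = psi c" unfolding G_def a0_def b0_def by simp
  have ca: "a0 T1 = colA 0 x" "a0 T2 = num 0 x" "a0 T1' = colA 1 x" "a0 T2' = num 1 x"
    using clc x unfolding cl_def a0_def by auto
  have cb: "b0 T1 = colA 0 y" "b0 T2 = num 0 y" "b0 T1' = colA 1 y" "b0 T2' = num 1 y"
    using clc y unfolding cl_def b0_def by auto
  have cb': "b0 T1 = (if 0 = j then colA 0 x else Suc (colA 0 x) mod 3)"
    "b0 T2 = (if 0 = j then Suc (num 0 x) mod 3 else num 0 x)"
    "b0 T1' = (if 1 = j then colA 1 x else Suc (colA 1 x) mod 3)"
    "b0 T2' = (if 1 = j then Suc (num 1 x) mod 3 else num 1 x)"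
    unfolding cb y_def colA_sh[OF j] num_sh by simp_all
  have T: "Tsum c x y = (\<Sum>a\<in>loc D. \<Sum>b\<in>loc D. h_full D hTI vTI a0 b0 a b * G a b)"
    unfolding Tsum_def a0_def b0_def G_def ..
  have epr1: "(\<Sum>a\<in>loc D. \<Sum>b\<in>loc D. A_gen T2 S1 S2 a0 b0 a b * G a b) = 0"
  proof (cases "j = 0")
    case True
    define K where "K = (if cl c \<and> sgX S1 S2 0 x c \<and> sgA S1' S2' 1 c then qq c else 0)"
    show ?thesis
    proof (rule epr_sum[OF a0 b0, where K = K])
      show "b0 T2 = (a0 T2 + 1) mod 3" using cb' ca True by simp
      fix \<alpha> \<beta> :: nat
      have "G (a0(S2 := \<alpha>)) (b0(S1 := \<beta>)) = psi (c(x := (c x)(S2 := \<alpha>), sh 0 x := (c (sh 0 x))(S1 := \<beta>)))"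
        unfolding G_def a0_def b0_def y_def True ..
      also have "\<dots> = (if \<alpha> = \<beta> then K else 0)"
      proof -
        let ?c = "c(x := (c x)(S2 := \<alpha>), sh 0 x := (c (sh 0 x))(S1 := \<beta>))"
        have n0: "x \<noteq> sh 0 x" using sh_neq[OF x r0] by auto
        have f1: "cl ?c = cl c" by (rule cl_upd[OF n0]) simp_all
        have f2: "qq ?c = qq c" by (rule qq_upd[OF n0]) simp_all
        have f3: "sgA S1' S2' 1 ?c = sgA S1' S2' 1 c" by (rule sgA_upd_other[OF n0]) simp_all
        have f4: "sgA S1 S2 0 ?c = (\<alpha> = \<beta> \<and> sgX S1 S2 0 x c)" by (rule sgA_upd_pair[OF x r0]) simp
        show ?thesis unfolding psi_def K_def using f1 f2 f3 f4 by auto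
      qed
      finally show "G (a0(S2 := \<alpha>)) (b0(S1 := \<beta>)) = (if \<alpha> = \<beta> then K else 0)" .
    qed simp_all
  next
    case False
    hence F': "0 \<noteq> j" by auto
    show ?thesis by (rule zero_sum, rule A_gen_zero, simp add: ca cb' F')
  qed
  have epr2: "(\<Sum>a\<in>loc D. \<Sum>b\<in>loc D. A_gen T2' S1' S2' a0 b0 a b * G a b) = 0"
  proof (cases "j = 1")
    case True
    define K where "K = (if cl c \<and> sgA S1 S2 0 c \<and> sgX S1' S2' 1 x c then qq c else 0)"
    show ?thesis
    proof (rule epr_sum[OF a0 b0, where K = K])
      show "b0 T2' = (a0 T2' + 1) mod 3" using cb' ca True by simp
      fix \<alpha> \<beta> :: nat
      have "G (a0(S2' := \<alpha>)) (b0(S1' := \<beta>)) = psi (c(x := (c x)(S2' := \<alpha>), sh 1 x := (c (sh 1 x))(S1' := \<beta>)))"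
        unfolding G_def a0_def b0_def y_def True ..
      also have "\<dots> = (if \<alpha> = \<beta> then K else 0)"
      proof -
        let ?c = "c(x := (c x)(S2' := \<alpha>), sh 1 x := (c (sh 1 x))(S1' := \<beta>))"
        have n0: "x \<noteq> sh 1 x" using sh_neq[OF x r1] by auto
        have f1: "cl ?c = cl c" by (rule cl_upd[OF n0]) simp_all
        have f2: "qq ?c = qq c" by (rule qq_upd[OF n0]) simp_all
        have f3: "sgA S1 S2 0 ?c = sgA S1 S2 0 c" by (rule sgA_upd_other[OF n0]) simp_all
        have f4: "sgA S1' S2' 1 ?c = (\<alpha> = \<beta> \<and> sgX S1' S2' 1 x c)" by (rule sgA_upd_pair[OF x r1]) simp
        show ?thesis unfolding psi_def K_def using f1 f2 f3 f4 by auto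
      qed
      finally show "G (a0(S2' := \<alpha>)) (b0(S1' := \<beta>)) = (if \<alpha> = \<beta> then K else 0)" .
    qed simp_all
  next
    case False
    hence F': "1 \<noteq> j" "Suc 0 \<noteq> j" by auto
    show ?thesis by (rule zero_sum, rule A_gen_zero, simp add: ca cb' F')
  qed
  have sw1: "(\<Sum>a\<in>loc D. \<Sum>b\<in>loc D. swap_term (A_gen T2 S1 S2) a0 b0 a b * G a b) = 0"
    by (rule zero_sum, rule A_gen_swap_zero, cases "j = 0", simp_all add: ca cb')
  have sw2: "(\<Sum>a\<in>loc D. \<Sum>b\<in>loc D. swap_term (A_gen T2' S1' S2') a0 b0 a b * G a b) = 0"
    by (rule zero_sum, rule A_gen_swap_zero, cases "j = 1", simp_all add: ca cb')
  have ri1: "(\<Sum>a\<in>loc D. \<Sum>b\<in>loc D. h_RI_gen D T2 hTI a0 b0 a b * G a b) = (if j = 0 then RIt hTI 0 c x else 0)"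
  proof (cases "j = 0")
    case True
    have "(\<Sum>a\<in>loc D. \<Sum>b\<in>loc D. h_RI_gen D T2 hTI a0 b0 a b * G a b)
        = (\<Sum>\<alpha><D. \<Sum>\<beta><D. entry2 D hTI (a0 Q) (b0 Q) \<alpha> \<beta> * G (a0(Q:=\<alpha>)) (b0(Q:=\<beta>)))"
      by (rule RI_sum[OF a0 b0], simp_all add: ca cb' True)
    also have "\<dots> = RIt hTI 0 c x" unfolding RIt_def G_def a0_def b0_def y_def True ..
    finally show ?thesis using True by simp
  next
    case False
    hence F': "0 \<noteq> j" by auto
    have "(\<Sum>a\<in>loc D. \<Sum>b\<in>loc D. h_RI_gen D T2 hTI a0 b0 a b * G a b) = 0"
      by (rule zero_sum, rule RI_zero, simp_all add: ca cb' F')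
    thus ?thesis using False by simp
  qed
  have ri2: "(\<Sum>a\<in>loc D. \<Sum>b\<in>loc D. h_RI_gen D T2' vTI a0 b0 a b * G a b) = (if j = 1 then RIt vTI 1 c x else 0)"
  proof (cases "j = 1")
    case True
    have "(\<Sum>a\<in>loc D. \<Sum>b\<in>loc D. h_RI_gen D T2' vTI a0 b0 a b * G a b)
        = (\<Sum>\<alpha><D. \<Sum>\<beta><D. entry2 D vTI (a0 Q) (b0 Q) \<alpha> \<beta> * G (a0(Q:=\<alpha>)) (b0(Q:=\<beta>)))"
      by (rule RI_sum[OF a0 b0], simp_all add: ca cb' True)
    also have "\<dots> = RIt vTI 1 c x" unfolding RIt_def G_def a0_def b0_def y_def True ..
    finally show ?thesis using True by simp
  next
    case False
    hence F': "1 \<noteq> j" "Suc 0 \<noteq> j" by auto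
    have "(\<Sum>a\<in>loc D. \<Sum>b\<in>loc D. h_RI_gen D T2' vTI a0 b0 a b * G a b) = 0"
      by (rule zero_sum, rule RI_zero, simp_all add: ca cb' F')
    thus ?thesis using False by simp
  qed
  show ?thesis
    unfolding y_def[symmetric] T Tsum_split diag_sum[OF a0 b0] epr1 epr2 sw1 sw2 ri1 ri2 G0
    using j by (cases "j = 0"; cases "j = 1") (simp_all add: ca cb' tileV_def)
qed

end


lemma ham_sum:
  assumes finS: "finite S" and finL: "finite L" and q: "q \<in> configs S L"
    and f: "\<And>u. u \<in> S \<Longrightarrow> f u \<in> S \<and> f u \<noteq> u"
  shows "(\<Sum>q'\<in>configs S L. ham S {(u, w). u \<in> S \<and> w = f u} t q q' * g q')
       = (\<Sum>u\<in>S. \<Sum>a\<in>L. \<Sum>b\<in>L. t (q u) (q (f u)) a b * g (q(u := a, f u := b)))"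
proof -
  have "(\<Sum>q'\<in>configs S L. ham S {(u, w). u \<in> S \<and> w = f u} t q q' * g q')
      = (\<Sum>q'\<in>configs S L. \<Sum>uw\<in>{(u, w). u \<in> S \<and> w = f u}. embed2 S (fst uw) (snd uw) t q q' * g q')"
    unfolding ham_def by (simp add: sum_distrib_right split_def)
  also have "\<dots> = (\<Sum>uw\<in>{(u, w). u \<in> S \<and> w = f u}. \<Sum>q'\<in>configs S L. embed2 S (fst uw) (snd uw) t q q' * g q')"
    by (rule sum.swap)
  also have "(\<Sum>uw\<in>{(u, w). u \<in> S \<and> w = f u}. \<Sum>q'\<in>configs S L. embed2 S (fst uw) (snd uw) t q q' * g q')
      = (\<Sum>u\<in>S. \<Sum>q'\<in>configs S L. embed2 S u (f u) t q q' * g q')"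
  proof -
    have seteq: "{(u, w). u \<in> S \<and> w = f u} = (\<lambda>u. (u, f u)) ` S" by auto
    show ?thesis unfolding seteq by (subst sum.reindex, auto intro: inj_onI)
  qed
  also have "\<dots> = (\<Sum>u\<in>S. \<Sum>a\<in>L. \<Sum>b\<in>L. t (q u) (q (f u)) a b * g (q(u := a, f u := b)))"
  proof (rule sum.cong[OF refl])
    fix u assume u: "u \<in> S"
    have fu: "f u \<in> S" "u \<noteq> f u" using f[OF u] by auto
    show "(\<Sum>q'\<in>configs S L. embed2 S u (f u) t q q' * g q')
       = (\<Sum>a\<in>L. \<Sum>b\<in>L. t (q u) (q (f u)) a b * g (q(u := a, f u := b)))"
      by (rule embed2_sum[OF finS finL q u fu(1) fu(2)])
  qed
  finally show ?thesis .
qed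

lemma sum_two_four: "2 \<le> r \<Longrightarrow> (\<Sum>j<r. if j < 2 then 2 else 4 :: complex) = 4 * (of_nat r - 1)"
proof (induction r rule: nat_induct_at_least)
  case base
  show ?case by (simp add: numeral_2_eq_2)
next
  case (Suc m)
  thus ?case by (simp add: algebra_simps)
qed

context ctx begin

definition rt :: "nat \<times> nat \<Rightarrow> nat \<times> nat" where "rt u = ((fst u + 1) mod n, snd u)"
definition upn :: "nat \<times> nat \<Rightarrow> nat \<times> nat" where "upn u = (fst u, (snd u + 1) mod n)"

lemma rt_in: "u \<in> sq_sites n \<Longrightarrow> rt u \<in> sq_sites n \<and> rt u \<noteq> u"
  using mod_suc_neq[of "fst u" n] nge npos by (auto simp: rt_def sq_sites_def prod_eq_iff)

lemma upn_in: "u \<in> sq_sites n \<Longrightarrow> upn u \<in> sq_sites n \<and> upn u \<noteq> u"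
  using mod_suc_neq[of "snd u" n] nge npos by (auto simp: upn_def sq_sites_def prod_eq_iff)

lemma finite_sq: "finite (sq_sites n)" by (simp add: sq_sites_def)

lemma v0eig': 
  assumes q: "q \<in> configs (sq_sites n) {..<D}"
  shows "(\<Sum>u\<in>sq_sites n. \<Sum>\<alpha><D. \<Sum>\<beta><D. entry2 D hTI (q u) (q (rt u)) \<alpha> \<beta> * v0 (q(u := \<alpha>, rt u := \<beta>)))
       + (\<Sum>u\<in>sq_sites n. \<Sum>\<alpha><D. \<Sum>\<beta><D. entry2 D vTI (q u) (q (upn u)) \<alpha> \<beta> * v0 (q(u := \<alpha>, upn u := \<beta>)))
       = E * v0 q"
proof -
  have rp: "right_pairs n = {(u, w). u \<in> sq_sites n \<and> w = rt u}"
    unfolding right_pairs_def rt_def ..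
  have up: "up_pairs n = {(u, w). u \<in> sq_sites n \<and> w = upn u}"
    unfolding up_pairs_def upn_def ..
  have eq1: "(\<Sum>q'\<in>configs (sq_sites n) {..<D}. ham (sq_sites n) (right_pairs n) (entry2 D hTI) q q' * v0 q')
     = (\<Sum>u\<in>sq_sites n. \<Sum>\<alpha><D. \<Sum>\<beta><D. entry2 D hTI (q u) (q (rt u)) \<alpha> \<beta> * v0 (q(u := \<alpha>, rt u := \<beta>)))"
    unfolding rp by (rule ham_sum[OF finite_sq _ q]) (simp_all add: rt_in)
  have eq2: "(\<Sum>q'\<in>configs (sq_sites n) {..<D}. ham (sq_sites n) (up_pairs n) (entry2 D vTI) q q' * v0 q')
     = (\<Sum>u\<in>sq_sites n. \<Sum>\<alpha><D. \<Sum>\<beta><D. entry2 D vTI (q u) (q (upn u)) \<alpha> \<beta> * v0 (q(u := \<alpha>, upn u := \<beta>)))"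
    unfolding up by (rule ham_sum[OF finite_sq _ q]) (simp_all add: upn_in)
  have "E * v0 q = (\<Sum>q'\<in>configs (sq_sites n) {..<D}. ham (sq_sites n) (right_pairs n) (entry2 D hTI) q q' * v0 q')
       + (\<Sum>q'\<in>configs (sq_sites n) {..<D}. ham (sq_sites n) (up_pairs n) (entry2 D vTI) q q' * v0 q')"
    unfolding v0eig[OF q, symmetric] by (simp add: distrib_right sum.distrib)
  thus ?thesis unfolding eq1 eq2 by simp
qed

lemma Qp_in:
  assumes c: "c \<in> configs (lattice r n) (loc D)" and p: "p \<in> PL"
  shows "Qp p c \<in> configs (sq_sites n) {..<D}"
proof -
  have "c (pt (fst u) (snd u) p) Q < D" if u: "u \<in> sq_sites n" for u
  proof -
    have "pt (fst u) (snd u) p \<in> lattice r n" using pt_in u p by (auto simp: sq_sites_def)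
    hence "c (pt (fst u) (snd u) p) \<in> loc D" using c by (auto simp: configs_def)
    thus ?thesis using loc_bound[of _ D Q] by simp
  qed
  thus ?thesis unfolding configs_def Qp_def by auto
qed

lemma Qp_app: "u \<in> sq_sites n \<Longrightarrow> Qp p c u = c (pt (fst u) (snd u) p) Q"
  by (simp add: Qp_def)

lemma Qp_upd:
  assumes p: "p \<in> PL" and p': "p' \<in> PL" and u1: "u1 \<in> sq_sites n" and u2: "u2 \<in> sq_sites n"
    and ne: "pt (fst u1) (snd u1) p \<noteq> pt (fst u2) (snd u2) p"
  shows "Qp p' (c(pt (fst u1) (snd u1) p := (c (pt (fst u1) (snd u1) p))(Q := \<alpha>),
                 pt (fst u2) (snd u2) p := (c (pt (fst u2) (snd u2) p))(Q := \<beta>)))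
       = (if p' = p then (Qp p c)(u1 := \<alpha>, u2 := \<beta>) else Qp p' c)"
proof (rule ext)
  fix u
  show "Qp p' (c(pt (fst u1) (snd u1) p := (c (pt (fst u1) (snd u1) p))(Q := \<alpha>),
                 pt (fst u2) (snd u2) p := (c (pt (fst u2) (snd u2) p))(Q := \<beta>))) u
       = (if p' = p then (Qp p c)(u1 := \<alpha>, u2 := \<beta>) else Qp p' c) u"
  proof (cases "u \<in> sq_sites n")
    case False
    thus ?thesis using u1 u2 by (auto simp: Qp_def)
  next
    case True
    have i1: "(pt (fst u) (snd u) p' = pt (fst u1) (snd u1) p) = (u = u1 \<and> p' = p)"
      using pt_inj[OF p' p] by (auto simp: prod_eq_iff)
    have i2: "(pt (fst u) (snd u) p' = pt (fst u2) (snd u2) p) = (u = u2 \<and> p' = p)"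
      using pt_inj[OF p' p] by (auto simp: prod_eq_iff)
    have u12: "u1 \<noteq> u2" using ne by auto
    show ?thesis using True u1 u2 u12 unfolding Qp_app[OF True] upd2[OF ne] i1 i2
      by (auto simp: Qp_app)
  qed
qed

lemma B_upd:
  assumes ne: "x \<noteq> y"
  shows "(cl (c(x := (c x)(Q := \<alpha>), y := (c y)(Q := \<beta>))) \<and> sgA S1 S2 0 (c(x := (c x)(Q := \<alpha>), y := (c y)(Q := \<beta>)))
            \<and> sgA S1' S2' 1 (c(x := (c x)(Q := \<alpha>), y := (c y)(Q := \<beta>))))
       = (cl c \<and> sgA S1 S2 0 c \<and> sgA S1' S2' 1 c)"
proof -
  have "cl (c(x := (c x)(Q := \<alpha>), y := (c y)(Q := \<beta>))) = cl c" by (rule cl_upd[OF ne]) simp_all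
  moreover have "sgA S1 S2 0 (c(x := (c x)(Q := \<alpha>), y := (c y)(Q := \<beta>))) = sgA S1 S2 0 c"
    by (rule sgA_upd_other[OF ne]) simp_all
  moreover have "sgA S1' S2' 1 (c(x := (c x)(Q := \<alpha>), y := (c y)(Q := \<beta>))) = sgA S1' S2' 1 c"
    by (rule sgA_upd_other[OF ne]) simp_all
  ultimately show ?thesis by simp
qed

lemma plane_sum:
  assumes c: "c \<in> configs (lattice r n) (loc D)" and p: "p \<in> PL"
    and B: "cl c \<and> sgA S1 S2 0 c \<and> sgA S1' S2' 1 c"
  shows "(\<Sum>u\<in>sq_sites n. RIt hTI 0 c (pt (fst u) (snd u) p) + RIt vTI 1 c (pt (fst u) (snd u) p))
     = E * psi c"
proof -
  define q where "q = Qp p c"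
  define Rest where "Rest = (\<Prod>p'\<in>PL - {p}. v0 (Qp p' c))"
  have qin: "q \<in> configs (sq_sites n) {..<D}" unfolding q_def by (rule Qp_in[OF c p])
  have psic: "psi c = v0 q * Rest"
    unfolding psi_def qq_def q_def Rest_def using B finite_PL p by (simp add: prod.remove)
  have gen: "psi (c(pt (fst u) (snd u) p := (c (pt (fst u) (snd u) p))(Q := \<alpha>),
                    pt (fst w) (snd w) p := (c (pt (fst w) (snd w) p))(Q := \<beta>)))
           = v0 (q(u := \<alpha>, w := \<beta>)) * Rest"
    if u: "u \<in> sq_sites n" and w: "w \<in> sq_sites n" and uw: "w \<noteq> u" for u w \<alpha> \<beta>
  proof -
    have ne: "pt (fst u) (snd u) p \<noteq> pt (fst w) (snd w) p"
    proof
      assume "pt (fst u) (snd u) p = pt (fst w) (snd w) p"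
      hence "fst u = fst w \<and> snd u = snd w" using pt_inj[OF p p] by blast
      hence "u = w" by (simp add: prod_eq_iff)
      thus False using uw by simp
    qed
    let ?c = "c(pt (fst u) (snd u) p := (c (pt (fst u) (snd u) p))(Q := \<alpha>),
                    pt (fst w) (snd w) p := (c (pt (fst w) (snd w) p))(Q := \<beta>))"
    have "psi ?c = qq ?c" unfolding psi_def B_upd[OF ne] using B by simp
    also have "\<dots> = v0 (Qp p ?c) * (\<Prod>p'\<in>PL - {p}. v0 (Qp p' ?c))"
      unfolding qq_def using finite_PL p by (simp add: prod.remove)
    also have "(\<Prod>p'\<in>PL - {p}. v0 (Qp p' ?c)) = Rest"
      unfolding Rest_def by (rule prod.cong[OF refl], simp add: Qp_upd[OF p _ u w ne])
    also have "Qp p ?c = q(u := \<alpha>, w := \<beta>)" unfolding q_def by (simp add: Qp_upd[OF p p u w ne])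
    finally show ?thesis .
  qed
  have ri0: "RIt hTI 0 c (pt (fst u) (snd u) p)
      = (\<Sum>\<alpha><D. \<Sum>\<beta><D. entry2 D hTI (q u) (q (rt u)) \<alpha> \<beta> * v0 (q(u := \<alpha>, rt u := \<beta>))) * Rest"
    if u: "u \<in> sq_sites n" for u
  proof -
    have r: "rt u \<in> sq_sites n" "rt u \<noteq> u" using rt_in[OF u] by auto
    have shu: "sh 0 (pt (fst u) (snd u) p) = pt (fst (rt u)) (snd (rt u)) p"
      by (simp add: sh0_pt rt_def)
    show ?thesis unfolding RIt_def shu
      by (simp add: gen[OF u r(1) r(2)] Qp_app[OF u, symmetric] Qp_app[OF r(1), symmetric] q_def
          sum_distrib_right mult.assoc)
  qed
  have ri1: "RIt vTI 1 c (pt (fst u) (snd u) p)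
      = (\<Sum>\<alpha><D. \<Sum>\<beta><D. entry2 D vTI (q u) (q (upn u)) \<alpha> \<beta> * v0 (q(u := \<alpha>, upn u := \<beta>))) * Rest"
    if u: "u \<in> sq_sites n" for u
  proof -
    have r: "upn u \<in> sq_sites n" "upn u \<noteq> u" using upn_in[OF u] by auto
    have shu: "sh 1 (pt (fst u) (snd u) p) = pt (fst (upn u)) (snd (upn u)) p"
      using sh1_pt[of "fst u" "snd u" p] by (simp add: upn_def)
    show ?thesis unfolding RIt_def shu
      by (simp add: gen[OF u r(1) r(2)] Qp_app[OF u, symmetric] Qp_app[OF r(1), symmetric] q_def
          sum_distrib_right mult.assoc)
  qed
  have "(\<Sum>u\<in>sq_sites n. RIt hTI 0 c (pt (fst u) (snd u) p) + RIt vTI 1 c (pt (fst u) (snd u) p))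
      = ((\<Sum>u\<in>sq_sites n. \<Sum>\<alpha><D. \<Sum>\<beta><D. entry2 D hTI (q u) (q (rt u)) \<alpha> \<beta> * v0 (q(u := \<alpha>, rt u := \<beta>)))
       + (\<Sum>u\<in>sq_sites n. \<Sum>\<alpha><D. \<Sum>\<beta><D. entry2 D vTI (q u) (q (upn u)) \<alpha> \<beta> * v0 (q(u := \<alpha>, upn u := \<beta>)))) * Rest"
  proof -
    have "(\<Sum>u\<in>sq_sites n. RIt hTI 0 c (pt (fst u) (snd u) p) + RIt vTI 1 c (pt (fst u) (snd u) p))
      = (\<Sum>u\<in>sq_sites n. (\<Sum>\<alpha><D. \<Sum>\<beta><D. entry2 D hTI (q u) (q (rt u)) \<alpha> \<beta> * v0 (q(u := \<alpha>, rt u := \<beta>))) * Rest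
          + (\<Sum>\<alpha><D. \<Sum>\<beta><D. entry2 D vTI (q u) (q (upn u)) \<alpha> \<beta> * v0 (q(u := \<alpha>, upn u := \<beta>))) * Rest)"
      by (rule sum.cong[OF refl], simp only: ri0 ri1)
    thus ?thesis by (simp only: sum.distrib distrib_right sum_distrib_right)
  qed
  also have "\<dots> = E * v0 q * Rest" by (simp add: v0eig'[OF qin])
  finally show ?thesis using psic by (simp add: mult.assoc)
qed

lemma Q_sum:
  assumes c: "c \<in> configs (lattice r n) (loc D)"
  shows "(\<Sum>x\<in>lattice r n. RIt hTI 0 c x + RIt vTI 1 c x) = of_nat (card PL) * E * psi c"
proof (cases "cl c \<and> sgA S1 S2 0 c \<and> sgA S1' S2' 1 c")
  case True
  have "(\<Sum>x\<in>lattice r n. RIt hTI 0 c x + RIt vTI 1 c x)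
     = (\<Sum>p\<in>PL. \<Sum>u\<in>sq_sites n. RIt hTI 0 c (pt (fst u) (snd u) p) + RIt vTI 1 c (pt (fst u) (snd u) p))"
    by (rule sum_planes)
  also have "\<dots> = (\<Sum>p\<in>PL. E * psi c)" by (rule sum.cong[OF refl], rule plane_sum[OF c _ True])
  finally show ?thesis by simp
next
  case False
  have z: "RIt M j c x = 0" if x: "x \<in> lattice r n" and j: "j < r" for M j x
  proof -
    have ne: "x \<noteq> sh j x" using sh_neq[OF x j] by auto
    show ?thesis unfolding RIt_def psi_def B_upd[OF ne] if_not_P[OF False] by simp
  qed
  have "psi c = 0" unfolding psi_def by (rule if_not_P[OF False])
  thus ?thesis using z r0 r1 by simp
qed

end


context ctx begin

lemma pt_app1'[simp]: "pt a b p (Suc 0) = b" using pt_app1 by simp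

lemma embed_sym:
  assumes c: "c \<in> configs (lattice r n) (loc D)" and u: "u \<in> lattice r n" and v: "v \<in> lattice r n"
  shows "embed2 (lattice r n) u v (h_full D hTI vTI) c c' = embed2 (lattice r n) v u (h_full D hTI vTI) c c'"
proof -
  have "h_full D hTI vTI (c u) (c v) (c' u) (c' v) = h_full D hTI vTI (c v) (c u) (c' v) (c' u)"
    by (rule h_full_sym, insert configs_loc[OF c] u v, auto)
  moreover have "lattice r n - {u, v} = lattice r n - {v, u}" by auto
  ultimately show ?thesis unfolding embed2_def by simp
qed

lemma cl_zero:
  assumes c: "c \<in> configs (lattice r n) (loc D)" and c': "c' \<in> configs (lattice r n) (loc D)"
    and ncl: "\<not> cl c" and cl': "cl c'" and u: "u \<in> lattice r n" and v: "v \<in> lattice r n"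
  shows "embed2 (lattice r n) u v (h_full D hTI vTI) c c' = 0"
proof (cases "\<forall>w\<in>lattice r n - {u, v}. c w = c' w")
  case False show ?thesis unfolding embed2_def by (rule if_not_P[OF False])
next
  case True
  show ?thesis
  proof (rule ccontr)
    assume nz: "embed2 (lattice r n) u v (h_full D hTI vTI) c c' \<noteq> 0"
    hence "h_full D hTI vTI (c u) (c v) (c' u) (c' v) \<noteq> 0" unfolding embed2_def using True by simp
    hence cc: "cls (c u) (c' u) \<and> cls (c v) (c' v)" using h_full_zero by blast
    have agree: "c w T1 = c' w T1 \<and> c w T2 = c' w T2 \<and> c w T1' = c' w T1' \<and> c w T2' = c' w T2'"
      if w: "w \<in> lattice r n" for w
    proof (cases "w = u \<or> w = v")
      case True thus ?thesis using cc unfolding cls_def by auto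
    next
      case False thus ?thesis using \<open>\<forall>w\<in>lattice r n - {u, v}. c w = c' w\<close> w by auto
    qed
    have "cl c" using cl' agree unfolding cl_def by auto
    thus False using ncl by simp
  qed
qed

definition lam :: complex where
  "lam = 4 * (of_nat r - 1) * of_nat (n ^ r) + of_nat (card PL) * E"

lemma eigen_eq:
  assumes c: "c \<in> configs (lattice r n) (loc D)"
  shows "(\<Sum>c'\<in>configs (lattice r n) (loc D). ham (lattice r n) (oriented_edges r n) (h_full D hTI vTI) c c' * psi c')
       = lam * psi c"
proof (cases "cl c")
  case True
  define g where "g u v = (\<Sum>c'\<in>configs (lattice r n) (loc D). embed2 (lattice r n) u v (h_full D hTI vTI) c c' * psi c')" for u v
  have "(\<Sum>c'\<in>configs (lattice r n) (loc D). ham (lattice r n) (oriented_edges r n) (h_full D hTI vTI) c c' * psi c')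
      = (\<Sum>c'\<in>configs (lattice r n) (loc D). \<Sum>uv\<in>oriented_edges r n. embed2 (lattice r n) (fst uv) (snd uv) (h_full D hTI vTI) c c' * psi c')"
    unfolding ham_def by (simp add: sum_distrib_right split_def)
  also have "\<dots> = (\<Sum>uv\<in>oriented_edges r n. g (fst uv) (snd uv))"
    unfolding g_def by (rule sum.swap)
  also have "\<dots> = (\<Sum>(u, v)\<in>oriented_edges r n. g u v)" by (simp add: split_def)
  also have "\<dots> = (\<Sum>x\<in>lattice r n. \<Sum>j<r. g x (sh j x))"
  proof (rule sum_OE)
    fix u v assume u: "u \<in> lattice r n" and v: "v \<in> lattice r n"
    show "g u v = g v u" unfolding g_def by (rule sum.cong[OF refl], simp add: embed_sym[OF c u v])
  qed
  also have "\<dots> = (\<Sum>x\<in>lattice r n. \<Sum>j<r. (if j < 2 then 2 else 4) * psi c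
          + (if j = 0 then RIt hTI 0 c x else 0) + (if j = 1 then RIt vTI 1 c x else 0))"
  proof (intro sum.cong refl)
    fix x j assume x: "x \<in> lattice r n" and j: "j \<in> {..<r}"
    have j': "j < r" using j by simp
    have "g x (sh j x) = Tsum c x (sh j x)"
      unfolding g_def Tsum_def
      by (rule embed2_sum[OF finite_S finite_loc c x sh_in[OF x j'] sh_neq[OF x j', symmetric]])
    also have "\<dots> = (if j < 2 then 2 else 4) * psi c
          + (if j = 0 then RIt hTI 0 c x else 0) + (if j = 1 then RIt vTI 1 c x else 0)" by (rule edge[OF c True x j'])
    finally show "g x (sh j x) = (if j < 2 then 2 else 4) * psi c
          + (if j = 0 then RIt hTI 0 c x else 0) + (if j = 1 then RIt vTI 1 c x else 0)" .
  qed
  also have "\<dots> = (\<Sum>x\<in>lattice r n. 4 * (of_nat r - 1) * psi c + (RIt hTI 0 c x + RIt vTI 1 c x))"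
  proof (rule sum.cong[OF refl])
    fix x
    have s1: "(\<Sum>j<r. (if j < 2 then 2 else 4) * psi c) = 4 * (of_nat r - 1) * psi c"
      using sum_two_four[OF r2] by (simp add: sum_distrib_right[symmetric])
    have s2: "(\<Sum>j<r. if j = 0 then RIt hTI 0 c x else 0) = RIt hTI 0 c x" using r0 by simp
    have s3: "(\<Sum>j<r. if j = 1 then RIt vTI 1 c x else 0) = RIt vTI 1 c x"
      using r1 by (simp only: sum.delta finite_lessThan lessThan_iff if_True)
    show "(\<Sum>j<r. (if j < 2 then 2 else 4) * psi c + (if j = 0 then RIt hTI 0 c x else 0)
             + (if j = 1 then RIt vTI 1 c x else 0))
        = 4 * (of_nat r - 1) * psi c + (RIt hTI 0 c x + RIt vTI 1 c x)"
      unfolding sum.distrib s1 s2 s3 by (simp only: add.assoc)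
  qed
  also have "\<dots> = of_nat (n ^ r) * (4 * (of_nat r - 1) * psi c) + of_nat (card PL) * E * psi c"
  proof -
    have e1: "(\<Sum>x\<in>lattice r n. 4 * (of_nat r - 1) * psi c + (RIt hTI 0 c x + RIt vTI 1 c x))
      = (\<Sum>x\<in>lattice r n. 4 * (of_nat r - 1) * psi c) + (\<Sum>x\<in>lattice r n. RIt hTI 0 c x + RIt vTI 1 c x)"
      by (rule sum.distrib)
    show ?thesis unfolding e1 Q_sum[OF c] by (simp add: card_S)
  qed
  finally show ?thesis unfolding lam_def by (simp add: algebra_simps)
next
  case False
  have "psi c = 0" unfolding psi_def using False by simp
  moreover have "ham (lattice r n) (oriented_edges r n) (h_full D hTI vTI) c c' * psi c' = 0"
    if c': "c' \<in> configs (lattice r n) (loc D)" for c'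
  proof (cases "cl c'")
    case False thus ?thesis unfolding psi_def by simp
  next
    case True
    have "ham (lattice r n) (oriented_edges r n) (h_full D hTI vTI) c c' = 0"
      unfolding ham_def
    proof (rule sum.neutral, clarify)
      fix u v assume uv: "(u, v) \<in> oriented_edges r n"
      from uv obtain a b where ab: "{u, v} = {a, b}" "a \<in> lattice r n" "b \<in> lattice r n"
        unfolding oriented_edges_def edges_def by blast
      hence "u \<in> lattice r n" "v \<in> lattice r n" by (auto simp: doubleton_eq_iff)
      thus "embed2 (lattice r n) u v (h_full D hTI vTI) c c' = 0"
        by (rule cl_zero[OF c c' \<open>\<not> cl c\<close> True])
    qed
    thus ?thesis by simp
  qed
  ultimately show ?thesis by simp
qed

definition c0 :: "(nat \<Rightarrow> nat) \<Rightarrow> reg \<Rightarrow> nat" where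
  "c0 = (\<lambda>x\<in>lattice r n. (\<lambda>R. case R of T1 \<Rightarrow> colA 0 x | T2 \<Rightarrow> num 0 x | T1' \<Rightarrow> colA 1 x
        | T2' \<Rightarrow> num 1 x | Q \<Rightarrow> q0 (x 0, x 1) | _ \<Rightarrow> 0))"

lemma c0_in: "c0 \<in> configs (lattice r n) (loc D)"
proof -
  have "q0 (x 0, x 1) < D" if x: "x \<in> lattice r n" for x
  proof -
    have "(x 0, x 1) \<in> sq_sites n" using x r0 r1 unfolding latI sq_sites_def by auto
    thus ?thesis using q0 unfolding configs_def by auto
  qed
  hence "(\<lambda>R. case R of T1 \<Rightarrow> colA 0 x | T2 \<Rightarrow> num 0 x | T1' \<Rightarrow> colA 1 x
        | T2' \<Rightarrow> num 1 x | Q \<Rightarrow> q0 (x 0, x 1) | _ \<Rightarrow> 0) \<in> loc D" if x: "x \<in> lattice r n" for x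
    using x unfolding loc_def by (auto simp: PiE_def Pi_def extensional_def reg_dim_def split: reg.splits)
  thus ?thesis unfolding c0_def configs_def restrict_PiE_iff by blast
qed

lemma psi_c0: "psi c0 \<noteq> 0"
proof -
  have cl0: "cl c0" unfolding cl_def c0_def by simp
  have sg1: "sgA S1 S2 0 c0" unfolding sgA_def c0_def using sh_in r0 by simp
  have sg2: "sgA S1' S2' 1 c0" unfolding sgA_def c0_def using sh_in r1 by simp
  have Qp0: "Qp p c0 = q0" if p: "p \<in> PL" for p
  proof
    fix u show "Qp p c0 u = q0 u"
    proof (cases "u \<in> sq_sites n")
      case True
      have "pt (fst u) (snd u) p \<in> lattice r n" using pt_in True p by (auto simp: sq_sites_def)
      thus ?thesis using True by (simp add: Qp_def c0_def)
    next
      case False thus ?thesis using PiE_arb[OF q0[unfolded configs_def] False] by (simp add: Qp_def False)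
    qed
  qed
  have "qq c0 = (\<Prod>p\<in>PL. v0 q0)" unfolding qq_def by (rule prod.cong[OF refl], simp add: Qp0)
  also have "\<dots> \<noteq> 0" using v0q0 by simp
  finally show ?thesis unfolding psi_def using cl0 sg1 sg2 by simp
qed

theorem eig_main:
  "eigenvalue (H_r D hTI vTI r n) (4 * (of_nat r - 1) * of_nat (n ^ r) + of_nat (n ^ (r - 2)) * E)"
proof -
  have "eigenvalue (H_r D hTI vTI r n) lam"
    unfolding H_r_def
  proof (rule eig_from_fun)
    show "finite (configs (lattice r n) (loc D))" by (rule finite_configs[OF finite_S finite_loc])
    show "\<And>c. c \<in> configs (lattice r n) (loc D) \<Longrightarrow>
      (\<Sum>b\<in>configs (lattice r n) (loc D). ham (lattice r n) (oriented_edges r n) (h_full D hTI vTI) c b * psi b)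
       = lam * psi c" by (rule eigen_eq)
    show "c0 \<in> configs (lattice r n) (loc D)" by (rule c0_in)
    show "psi c0 \<noteq> 0" by (rule psi_c0)
  qed
  thus ?thesis unfolding lam_def card_PL .
qed

end


lemma idx_lt: "p < D \<Longrightarrow> q < D \<Longrightarrow> p * D + q < D * (D::nat)"
proof -
  assume p: "p < D" and q: "q < D"
  have "p * D + q < p * D + D" using q by simp
  also have "\<dots> = (p + 1) * D" by simp
  also have "\<dots> \<le> D * D" using p by (intro mult_le_mono1) simp
  finally show ?thesis .
qed

lemma entry2_herm:
  assumes M: "psd (D * D) M" and "p < D" "q < D" "p' < D" "q' < D"
  shows "entry2 D M p q p' q' = cnj (entry2 D M p' q' p q)"
  using M idx_lt[OF assms(2,3)] idx_lt[OF assms(4,5)] unfolding psd_def entry2_def by blast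

lemma ham_herm:
  assumes t: "\<And>a b a' b'. a \<in> L \<Longrightarrow> b \<in> L \<Longrightarrow> a' \<in> L \<Longrightarrow> b' \<in> L \<Longrightarrow> t a b a' b' = cnj (t a' b' a b)"
    and P: "P \<subseteq> S \<times> S" and c: "c \<in> configs S L" and c': "c' \<in> configs S L"
  shows "ham S P t c c' = cnj (ham S P t c' c)"
  unfolding ham_def cnj_sum
proof (rule sum.cong[OF refl], clarify)
  fix u v assume uv: "(u, v) \<in> P"
  hence "u \<in> S" "v \<in> S" using P by auto
  hence inL: "c u \<in> L" "c v \<in> L" "c' u \<in> L" "c' v \<in> L" using c c' by (auto simp: configs_def)
  have "(\<forall>w\<in>S - {u, v}. c w = c' w) = (\<forall>w\<in>S - {u, v}. c' w = c w)" by (simp add: eq_commute)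
  thus "embed2 S u v t c c' = cnj (embed2 S u v t c' c)"
    unfolding embed2_def using t[OF inL] by simp
qed

theorem mainTheorem3:
  fixes r :: nat and L :: "bool list set" and f :: "bool list \<Rightarrow> int"
    and n0 :: int and D :: nat and hTI vTI :: "complex mat"
  assumes r2: "r \<ge> 2"
    and f_mult3: "\<forall>x. 3 dvd f x"
    and f_prime: "\<forall>x. prime (f x div 3)"
    and f_poly: "\<exists>c k. \<forall>x. ln (real_of_int (f x)) \<le> c * (real (length x) + 1) ^ k"
    and D_pos: "D \<ge> 1"
    and h_psd: "psd (D * D) hTI"
    and v_psd: "psd (D * D) vTI"
    and yes: "\<forall>k::nat. \<exists>C::real. \<forall>x\<in>L. f x \<ge> n0 \<longrightarrow>
               E0 (H_TI D hTI vTI (nat (f x))) \<le> C / real_of_int (f x) ^ k"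
    and no: "\<exists>c::real. c > 0 \<and> (\<forall>x. x \<notin> L \<and> f x \<ge> n0 \<longrightarrow>
               E0 (H_TI D hTI vTI (nat (f x))) \<ge> c / real_of_int (f x) ^ 3)"
  shows "\<forall>k::nat. \<exists>C::real. \<forall>x\<in>L. f x \<ge> n0 \<longrightarrow>
           E0 (H_r D hTI vTI r (nat (f x)))
             \<le> 4 * real_of_int (f x) ^ r * (real r - 1) + C / real_of_int (f x) ^ k"
proof (intro allI)
  fix k :: nat
  obtain C where C: "\<forall>x\<in>L. f x \<ge> n0 \<longrightarrow>
      E0 (H_TI D hTI vTI (nat (f x))) \<le> C / real_of_int (f x) ^ (k + (r - 2))"
    using yes by blast
  show "\<exists>C::real. \<forall>x\<in>L. f x \<ge> n0 \<longrightarrow>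
           E0 (H_r D hTI vTI r (nat (f x)))
             \<le> 4 * real_of_int (f x) ^ r * (real r - 1) + C / real_of_int (f x) ^ k"
  proof (intro exI[of _ C] ballI impI)
    fix x assume xL: "x \<in> L" and xn0: "f x \<ge> n0"
    define m where "m = f x div 3"
    have pm: "prime m" using f_prime m_def by simp
    hence m2: "m \<ge> 2" by (rule prime_ge_2_int)
    have fx: "f x = 3 * m" using f_mult3 m_def by simp
    define n where "n = nat (f x)"
    have n3m: "n = 3 * nat m" using fx m2 unfolding n_def by simp
    have n3: "3 dvd n" using n3m by simp
    have nge: "n \<ge> 3" using n3m m2 by simp
    have rn: "real n = real_of_int (f x)" using fx m2 unfolding n_def by simp
    have npos: "real n > 0" using nge by simp
    interpret lat n r by (unfold_locales, rule n3, rule nge, rule r2)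
    let ?B = "configs (sq_sites n) {..<D}"
    let ?A = "\<lambda>c c'. ham (sq_sites n) (right_pairs n) (entry2 D hTI) c c'
           + ham (sq_sites n) (up_pairs n) (entry2 D vTI) c c'"
    define M where "M = H_TI D hTI vTI n"
    have MB: "M = op_mat ?B ?A" unfolding M_def H_TI_def ..
    have finB: "finite ?B" by (rule finite_configs, simp add: sq_sites_def, simp)
    have z: "(\<lambda>u\<in>sq_sites n. 0) \<in> ?B" using D_pos unfolding configs_def by auto
    hence cardB: "card ?B > 0" using finB card_gt_0_iff by blast
    have Mc: "M \<in> carrier_mat (card ?B) (card ?B)" unfolding MB by (rule op_mat_carrier)
    have herm: "M $$ (i, j) = cnj (M $$ (j, i))" if i: "i < card ?B" and j: "j < card ?B" for i j
    proof -
      have bij: "bij_betw (enum ?B) {..<card ?B} ?B" by (rule enum_bij[OF finB])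
      have ei: "enum ?B i \<in> ?B" and ej: "enum ?B j \<in> ?B" using bij i j by (auto dest: bij_betwE)
      have hh: "entry2 D hTI a b a' b' = cnj (entry2 D hTI a' b' a b)"
        if "a \<in> {..<D}" "b \<in> {..<D}" "a' \<in> {..<D}" "b' \<in> {..<D}" for a b a' b'
        by (rule entry2_herm[OF h_psd]) (use that in auto)
      have vv: "entry2 D vTI a b a' b' = cnj (entry2 D vTI a' b' a b)"
        if "a \<in> {..<D}" "b \<in> {..<D}" "a' \<in> {..<D}" "b' \<in> {..<D}" for a b a' b'
        by (rule entry2_herm[OF v_psd]) (use that in auto)
      have P1: "right_pairs n \<subseteq> sq_sites n \<times> sq_sites n"
        unfolding right_pairs_def sq_sites_def using lat.npos[OF lat_axioms] by auto
      have P2: "up_pairs n \<subseteq> sq_sites n \<times> sq_sites n"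
        unfolding up_pairs_def sq_sites_def using lat.npos[OF lat_axioms] by auto
      have "?A (enum ?B i) (enum ?B j) = cnj (?A (enum ?B j) (enum ?B i))"
        using ham_herm[OF hh P1 ei ej] ham_herm[OF vv P2 ei ej] by simp
      thus ?thesis unfolding MB op_mat_eq using i j by simp
    qed
    have evM: "eigenvalue M (complex_of_real (E0 M))" by (rule E0_eig[OF Mc cardB herm])
    then obtain v where ev: "eigenvector M v (complex_of_real (E0 M))" unfolding eigenvalue_def by blast
    obtain \<phi> where \<phi>: "\<forall>c\<in>?B. (\<Sum>b\<in>?B. ?A c b * \<phi> b) = complex_of_real (E0 M) * \<phi> c"
      and nz: "\<exists>b\<in>?B. \<phi> b \<noteq> 0"
    proof -
      have evB: "eigenvector (op_mat ?B ?A) v (complex_of_real (E0 M))"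
        by (subst MB[symmetric]) (rule ev)
      show ?thesis using fun_from_eig[OF finB evB] that by blast
    qed
    then obtain b0 where b0: "b0 \<in> ?B" "\<phi> b0 \<noteq> 0" by blast
    interpret ctx n r D hTI vTI \<phi> "complex_of_real (E0 M)" b0
      by (unfold_locales, rule D_pos, use \<phi> in blast, rule b0(1), rule b0(2))
    have "eigenvalue (H_r D hTI vTI r n)
        (4 * (of_nat r - 1) * of_nat (n ^ r) + of_nat (n ^ (r - 2)) * complex_of_real (E0 M))"
      by (rule eig_main)
    moreover have "4 * (of_nat r - 1) * of_nat (n ^ r) + of_nat (n ^ (r - 2)) * complex_of_real (E0 M)
        = complex_of_real (4 * (real r - 1) * real (n ^ r) + real (n ^ (r - 2)) * E0 M)"
      by simp
    ultimately have evH: "eigenvalue (H_r D hTI vTI r n)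
        (complex_of_real (4 * (real r - 1) * real (n ^ r) + real (n ^ (r - 2)) * E0 M))" by simp
    have "E0 (H_r D hTI vTI r n) \<le> 4 * (real r - 1) * real (n ^ r) + real (n ^ (r - 2)) * E0 M"
      by (rule E0_le[OF _ evH], unfold H_r_def, rule op_mat_carrier)
    moreover have "E0 M \<le> C / real n ^ (k + (r - 2))"
      using C xL xn0 unfolding M_def n_def rn[unfolded n_def] by simp
    moreover have "real (n ^ (r - 2)) * (C / real n ^ (k + (r - 2))) = C / real n ^ k"
      using npos by (simp add: power_add field_simps)
    moreover have "real (n ^ (r - 2)) \<ge> 0" by simp
    ultimately have "E0 (H_r D hTI vTI r n) \<le> 4 * (real r - 1) * real n ^ r + C / real n ^ k"
      by (metis (no_types, lifting) add_left_mono mult_left_mono of_nat_power order_trans)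
    thus "E0 (H_r D hTI vTI r (nat (f x)))
             \<le> 4 * real_of_int (f x) ^ r * (real r - 1) + C / real_of_int (f x) ^ k"
      unfolding n_def[symmetric] rn by (simp add: algebra_simps)
  qed
qed


end
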